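(* (a) For every integer $i\ge 1$ and every integer $m\ge i+1$, $$d_i^2(m)\bigl(d_i^2(m)-d_i(m-1)d_i(m+1)\bigr)>d_i^2(m-1)\bigl(d_i^2(m+1)-d_i(m)d_i(m+2)\bigr).$$ (b) For $i=0$ the reverse strict inequality holds: for every integer $m\ge 1$, $$d_0^2(m)\bigl(d_0^2(m)-d_0(m-1)d_0(m+1)\bigr)<d_0^2(m-1)\bigl(d_0^2(m+1)-d_0(m)d_0(m+2)\bigr).$$
   Context: For integers $m\ge 0$ and $0\le i\le m$, the Boros–Moll numbers are $$d_i(m)=2^{-2m}\sum_{k=i}^{m}2^k\binom{2m-2k}{m-k}\binom{m+k}{k}\binom{k}{i}.$$ *)

theory Defs
  imports Complex_Main
begin

definition boros_moll :: "nat \<Rightarrow> nat \<Rightarrow> real" where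
  "boros_moll i m = (\<Sum>k=i..m. 2 ^ k * real ((2*m - 2*k) choose (m - k))
      * real ((m + k) choose k) * real (k choose i)) / 2 ^ (2*m)"

end

theory Submission
  imports Defs
begin


lemma B1: "real ((2*q+2) choose (q+1)) = 2*(2*real q+1)/(real q+1) * real ((2*q) choose q)"
proof -
  have a: "Suc q * (Suc (2*q+1) choose Suc q) = Suc (2*q+1) * ((2*q+1) choose q)"
    by (rule Suc_times_binomial)
  have b: "(2*q+1 - q) * ((2*q+1) choose q) = (2*q+1) * ((2*q+1-1) choose q)"
    by (rule binomial_absorb_comp)
  have b': "(q+1) * ((2*q+1) choose q) = (2*q+1) * ((2*q) choose q)"
    using b by (simp add: Suc_diff_le)
  have a': "real (q+1) * real ((2*q+2) choose (q+1)) = real (2*q+2) * real ((2*q+1) choose q)"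
    using a by (metis Suc_eq_plus1 add_Suc_right of_nat_mult one_add_one add.assoc)
  have b'': "real (q+1) * real ((2*q+1) choose q) = real (2*q+1) * real ((2*q) choose q)"
    using b' by (metis of_nat_mult)
  have "real (q+1) * (real (q+1) * real ((2*q+2) choose (q+1))) = real (q+1) * (2*(2*real q+1) * real ((2*q) choose q))"
    using a' b'' by (simp add: algebra_simps)
  then have "real (q+1) * real ((2*q+2) choose (q+1)) = 2*(2*real q+1) * real ((2*q) choose q)"
    by simp
  then show ?thesis by (simp add: field_simps)
qed

lemma B2: "real ((n+1+k) choose k) = (real n+1+real k)/(real n+1) * real ((n+k) choose k)"
proof -
  have "(n+1+k - k) * ((n+1+k) choose k) = (n+1+k) * ((n+1+k-1) choose k)"
    by (rule binomial_absorb_comp)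
  then have "(n+1) * ((n+1+k) choose k) = (n+1+k) * ((n+k) choose k)" by simp
  then have "real (n+1) * real ((n+1+k) choose k) = real (n+1+k) * real ((n+k) choose k)"
    by (metis of_nat_mult)
  then show ?thesis by (simp add: field_simps)
qed

lemma aux3: "(b::real) \<noteq> 0 \<Longrightarrow> c \<noteq> 0 \<Longrightarrow> d \<noteq> 0 \<Longrightarrow> k \<noteq> 0 \<Longrightarrow> a/(b*(c*d)) = k/c*(a/(k*b*d))"
  by (simp add: field_simps)

lemma B3: assumes "k \<ge> 1" shows "real ((n+k) choose (k-1)) = real k/(real n+1) * real ((n+k) choose k)"
proof -
  obtain k' where k: "k = Suc k'" using assms by (cases k) auto
  have f1: "real ((n+k) choose k') = fact (n+k) / (fact k' * fact (n+k-k'))"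
    by (rule binomial_fact) (simp add: k)
  have f2: "real ((n+k) choose k) = fact (n+k) / (fact k * fact (n+k-k))"
    by (rule binomial_fact) simp
  have e1: "n+k-k' = Suc n" by (simp add: k)
  have e2: "n+k-k = n" by simp
  have g1: "(fact (Suc n) :: real) = (real n + 1) * fact n" by (simp add: fact_Suc)
  have g2: "(fact k :: real) = real k * fact k'" by (simp add: k fact_Suc)
  have p1: "(fact k' :: real) > 0" "(fact n :: real) > 0" by auto
  have "real ((n+k) choose (k-1)) = real ((n+k) choose k')" by (simp add: k)
  also have "\<dots> = fact (n+k) / (fact k' * fact (Suc n))"
    using f1 by (simp only: e1)
  also have "\<dots> = fact (n+k) / (fact k' * ((real n + 1) * fact n))"
    by (simp only: g1)
  also have "\<dots> = real k/(real n+1) * (fact (n+k) / (fact k * fact n))"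
  proof -
    have kp: "real k \<noteq> 0" using assms by simp
    have np: "real n + 1 \<noteq> 0" by (simp add: add_nonneg_eq_0_iff)
    show ?thesis using p1 kp np by (simp only: g2) (rule aux3; simp)
  qed
  also have "\<dots> = real k/(real n+1) * real ((n+k) choose k)"
    using f2 by (simp only: e2)
  finally show ?thesis .
qed

lemma B4: assumes "k \<ge> 1" "i \<le> k" shows "real ((k-1) choose i) * real k = (real k - real i) * real (k choose i)"
proof -
  have "(k - i) * (k choose i) = k * ((k-1) choose i)" by (rule binomial_absorb_comp)
  then have "real (k-i) * real (k choose i) = real k * real ((k-1) choose i)" by (metis of_nat_mult)
  then show ?thesis using assms by (simp add: of_nat_diff algebra_simps)
qed

definition Aa :: "real \<Rightarrow> real \<Rightarrow> real" where "Aa i n = 2*(n+1)*(8*n*n+24*n+19-4*i*i)"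
definition Bb :: "real \<Rightarrow> real \<Rightarrow> real" where "Bb i n = (n+i+1)*(4*n+3)*(4*n+5)"
definition Cc :: "real \<Rightarrow> real \<Rightarrow> real" where "Cc i n = 4*(n+1)*(n+2)*(n+2-i)"
definition Pp :: "real \<Rightarrow> real \<Rightarrow> real \<Rightarrow> real" where
  "Pp n i k = 16 - 28*k + 16*k^2 + 16*i + 8*i*k - 8*i*k^2 + 56*n - 68*n*k + 24*n*k^2 + 40*n*i + 8*n*i*k - 8*n*i*k^2 + 72*n^2 - 56*n^2*k + 8*n^2*k^2 + 32*n^2*i + 40*n^3 - 16*n^3*k + 8*n^3*i + 8*n^4"

lemma gen_poly:
  fixes q k i Z Y f :: real
  shows "(2*q+1)*(2*q+3)*(Cc i (k+q) * (4*(2*q+1)*(2*q+3)*Z) * ((k+q+1+k)*(k+q+2+k)*Y) * f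
     - 4*Aa i (k+q) * (2*(2*q+1)*(q+2)*Z) * ((k+q+1+k)*(k+q+2)*Y) * f
     + 16*Bb i (k+q) * ((q+1)*(q+2)*Z) * ((k+q+1)*(k+q+2)*Y) * f)
   = 4*(2*q+3) * (2*(2*q+1)*(q+2)*Z) * ((k+q+1+k)*(k+q+2)*Y) * f * Pp (k+q) i (k+1)
     - 2*(2*q+1) * (4*(2*q+1)*(2*q+3)*Z) * ((k+q+2)*Y) * ((k-i)*f) * Pp (k+q) i k"
  unfolding Aa_def Bb_def Cc_def Pp_def by algebra


definition tm :: "nat \<Rightarrow> nat \<Rightarrow> nat \<Rightarrow> real" where
  "tm i m k = (if i \<le> k \<and> k \<le> m then 2^k * real ((2*m-2*k) choose (m-k)) * real ((m+k) choose k) * real (k choose i) / 4^m else 0)"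

lemma tm_eq: "k \<le> m \<Longrightarrow> tm i m k = 2^k * real ((2*m-2*k) choose (m-k)) * real ((m+k) choose k) * real (k choose i) / 4^m"
  by (auto simp: tm_def binomial_eq_0)

definition Gt :: "nat \<Rightarrow> nat \<Rightarrow> nat \<Rightarrow> real" where
  "Gt i n k = (if k = 0 then 0 else tm i (n+1) (k-1) * Pp (real n) (real i) (real k) / (2*real n + 3 - 2*real k))"

definition Ft :: "nat \<Rightarrow> nat \<Rightarrow> nat \<Rightarrow> real" where
  "Ft i n k = Cc (real i) (real n) * tm i (n+2) k - Aa (real i) (real n) * tm i (n+1) k + Bb (real i) (real n) * tm i n k"

lemma generic:
  assumes ik: "i \<le> k" and kn: "k \<le> n"
  shows "Ft i n k = Gt i n (k+1) - Gt i n k"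
proof -
  obtain q where nq: "n = k + q" using kn le_Suc_ex by blast
  define c0 where "c0 = real ((2*q) choose q)"
  define c1 where "c1 = real ((2*q+2) choose (q+1))"
  define c2 where "c2 = real ((2*q+4) choose (q+2))"
  define e0 where "e0 = real ((n+k) choose k)"
  define e1 where "e1 = real ((n+1+k) choose k)"
  define e2 where "e2 = real ((n+2+k) choose k)"
  define f where "f = real (k choose i)"
  define K :: real where "K = 2^k / 4^(n+2)"
  define Z where "Z = c0 / ((real q+1)*(real q+2))"
  define Y where "Y = e0 / ((real n+1)*(real n+2))"
  have Kpos: "K > 0" by (simp add: K_def)
  have hc0: "c0 = (real q+1)*(real q+2)*Z" by (simp add: Z_def add_nonneg_eq_0_iff)
  have hc1': "c1 = 2*(2*real q+1)/(real q+1)*c0" unfolding c1_def c0_def by (rule B1)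
  have hc1: "c1 = 2*(2*real q+1)*(real q+2)*Z"
    unfolding hc1' hc0 by (simp add: field_simps add_nonneg_eq_0_iff)
  have hc2': "c2 = 2*(2*real q+3)/(real q+2) * c1"
  proof -
    have "real ((2*(q+1)+2) choose ((q+1)+1)) = 2*(2*real (q+1)+1)/(real (q+1)+1) * real ((2*(q+1)) choose (q+1))"
      by (rule B1)
    moreover have "2*(q+1)+2 = 2*q+4" "(q+1)+1 = q+2" "2*(q+1) = 2*q+2" by auto
    ultimately show ?thesis unfolding c2_def c1_def by (simp only:) (simp add: algebra_simps)
  qed
  have hc2: "c2 = 4*(2*real q+1)*(2*real q+3)*Z"
    unfolding hc2' hc1 by (simp add: field_simps add_nonneg_eq_0_iff)
  have he0: "e0 = (real n+1)*(real n+2)*Y" by (simp add: Y_def add_nonneg_eq_0_iff)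
  have he1': "e1 = (real n+1+real k)/(real n+1) * e0" unfolding e1_def e0_def by (rule B2)
  have he1: "e1 = (real n+1+real k)*(real n+2)*Y"
    unfolding he1' he0 by (simp add: field_simps add_nonneg_eq_0_iff)
  have he2': "e2 = (real n+2+real k)/(real n+2) * e1"
  proof -
    have "real ((n+1)+1+k choose k) = (real (n+1)+1+real k)/(real (n+1)+1) * real ((n+1+k) choose k)"
      by (rule B2)
    moreover have "(n+1)+1+k = n+2+k" by auto
    ultimately show ?thesis unfolding e2_def e1_def by (simp only:) (simp add: algebra_simps)
  qed
  have he2: "e2 = (real n+1+real k)*(real n+2+real k)*Y"
    unfolding he2' he1 by (simp add: field_simps add_nonneg_eq_0_iff)
  have p4: "(4::real)^(n+2) = 16 * 4^n" "(4::real)^(n+1) = 4 * 4^n" by (simp_all add: power_add)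
  have t0: "tm i n k = K*16*c0*e0*f"
  proof -
    have a: "2*n-2*k = 2*q" "n-k = q" using nq by auto
    have "tm i n k = 2^k * c0 * e0 * f / 4^n"
      unfolding tm_eq[OF kn] a c0_def e0_def f_def ..
    then show ?thesis by (simp add: K_def p4)
  qed
  have t1: "tm i (n+1) k = K*4*c1*e1*f"
  proof -
    have a: "2*(n+1)-2*k = 2*q+2" "n+1-k = q+1" using nq by auto
    have "tm i (n+1) k = 2^k * c1 * e1 * f / 4^(n+1)"
    proof -
      have kn1: "k \<le> n+1" using kn by simp
      show ?thesis unfolding tm_eq[OF kn1] a c1_def e1_def f_def ..
    qed
    then show ?thesis by (simp add: K_def p4)
  qed
  have t2: "tm i (n+2) k = K*c2*e2*f"
  proof -
    have a: "2*(n+2)-2*k = 2*q+4" "n+2-k = q+2" using nq by auto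
    have "tm i (n+2) k = 2^k * c2 * e2 * f / 4^(n+2)"
    proof -
      have kn1: "k \<le> n+2" using kn by simp
      show ?thesis unfolding tm_eq[OF kn1] a c2_def e2_def f_def ..
    qed
    then show ?thesis by (simp add: K_def)
  qed
  have gk1: "Gt i n (k+1) = K*4*c1*e1*f * Pp (real n) (real i) (real k + 1) / (2*real q+1)"
  proof -
    have "Gt i n (k+1) = tm i (n+1) k * Pp (real n) (real i) (real (k+1)) / (2*real n+3-2*real (k+1))"
      by (simp add: Gt_def)
    also have e: "2*real n+3-2*real (k+1) = 2*real q+1" by (simp add: nq)
    also have "tm i (n+1) k * Pp (real n) (real i) (real (k+1)) / (2*real q+1) = K*4*c1*e1*f * Pp (real n) (real i) (real k + 1) / (2*real q+1)"
      by (simp only: t1 of_nat_add of_nat_1)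
    finally show ?thesis .
  qed
  have gk: "Gt i n k = K*2*c2*((real n+2)*Y)*((real k - real i)*f) * Pp (real n) (real i) (real k) / (2*real q+3)"
  proof (cases "k = 0")
    case True then show ?thesis using ik by (simp add: Gt_def)
  next
    case False
    then have k1: "k \<ge> 1" by simp
    have a: "2*(n+1)-2*(k-1) = 2*q+4" "n+1-(k-1) = q+2" "n+1+(k-1) = n+k" using nq k1 by auto
    have em: "real ((n+k) choose (k-1)) = real k/(real n+1) * e0" unfolding e0_def by (rule B3[OF k1])
    have fm: "real ((k-1) choose i) * real k = (real k - real i) * f" unfolding f_def by (rule B4[OF k1 ik])
    have "tm i (n+1) (k-1) = 2^(k-1) * c2 * real ((n+k) choose (k-1)) * real ((k-1) choose i) / 4^(n+1)"
    proof -
      have kn1: "k-1 \<le> n+1" using kn by simp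
      show ?thesis unfolding tm_eq[OF kn1] a c2_def ..
    qed
    also have "\<dots> = K*2*c2*((real n+2)*Y)*((real k - real i)*f)"
    proof -
      have p2: "(2::real)^k = 2 * 2^(k-1)" using k1 by (cases k) auto
      have kr: "real k \<noteq> 0" using k1 by simp
      have "real ((n+k) choose (k-1)) * real ((k-1) choose i) = (real n+2)*Y*((real k - real i)*f)"
      proof -
        have "real ((n+k) choose (k-1)) * real ((k-1) choose i) = e0/(real n+1) * (real ((k-1) choose i) * real k)"
          unfolding em by (simp add: field_simps add_nonneg_eq_0_iff)
        also have "\<dots> = (real n+2)*Y*((real k - real i)*f)"
        proof -
          have e0n: "e0/(real n+1) = (real n+2)*Y" unfolding he0 by (simp add: add_nonneg_eq_0_iff)
          show ?thesis unfolding e0n fm ..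
        qed
        finally show ?thesis .
      qed
      then show ?thesis by (simp add: K_def p2 p4)
    qed
    moreover have "2*real n + 3 - 2*real k = 2*real q+3" by (simp add: nq)
    ultimately show ?thesis using False by (simp add: Gt_def)
  qed
  note gp = gen_poly[where q="real q" and k="real k" and i="real i" and Z=Z and Y=Y and f=f]
  have rn: "real n = real k + real q" by (simp add: nq)
  have "Ft i n k * ((2*real q+1)*(2*real q+3)) = (Gt i n (k+1) - Gt i n k) * ((2*real q+1)*(2*real q+3))"
  proof -
    have "Ft i n k * ((2*real q+1)*(2*real q+3)) = K * ((2*real q+1)*(2*real q+3)*(Cc (real i) (real k+real q) * (4*(2*real q+1)*(2*real q+3)*Z) * ((real k+real q+1+real k)*(real k+real q+2+real k)*Y) * f
     - 4*Aa (real i) (real k+real q) * (2*(2*real q+1)*(real q+2)*Z) * ((real k+real q+1+real k)*(real k+real q+2)*Y) * f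
     + 16*Bb (real i) (real k+real q) * ((real q+1)*(real q+2)*Z) * ((real k+real q+1)*(real k+real q+2)*Y) * f))"
      unfolding Ft_def t0 t1 t2 hc0 hc1 hc2 he0 he1 he2 rn by algebra
    also have "\<dots> = K * (4*(2*real q+3) * (2*(2*real q+1)*(real q+2)*Z) * ((real k+real q+1+real k)*(real k+real q+2)*Y) * f * Pp (real k+real q) (real i) (real k+1)
     - 2*(2*real q+1) * (4*(2*real q+1)*(2*real q+3)*Z) * ((real k+real q+2)*Y) * ((real k-real i)*f) * Pp (real k+real q) (real i) (real k))"
      by (rule arg_cong[of _ _ "(*) K"]) (rule gp)
    also have "\<dots> = (Gt i n (k+1) - Gt i n k) * ((2*real q+1)*(2*real q+3))"
    proof -
      have d1: "2*real q+1 \<noteq> 0" "2*real q+3 \<noteq> 0" by (simp_all add: add_nonneg_eq_0_iff)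
      have aux: "\<And>a b x y::real. x \<noteq> 0 \<Longrightarrow> y \<noteq> 0 \<Longrightarrow> (a/x - b/y)*(x*y) = a*y - b*x"
        by (simp add: field_simps)
      show ?thesis unfolding gk1 gk aux[OF d1] unfolding hc1 hc2 he1 rn by algebra
    qed
    finally show ?thesis .
  qed
  moreover have "(2*real q+1)*(2*real q+3) \<noteq> 0" by (simp add: add_nonneg_eq_0_iff)
  ultimately show ?thesis by simp
qed


lemma low: assumes "k < i" shows "Ft i n k = Gt i n (k+1) - Gt i n k"
  using assms by (auto simp: Ft_def Gt_def tm_def)

lemma edge1_poly: fixes n i :: real
  shows "4*(n+1)*(n+2-i)*(2*n+3)*(n+1) - 2*Aa i n*(n+1) = -2*(n+1)*Pp n i (n+2) - (n+1-i)*Pp n i (n+1)"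
  unfolding Aa_def Pp_def by algebra

lemma edge2_poly: fixes n i :: real
  shows "Pp n i (n+2) = 4*(n+1)*(n+2)*(2*n+3)"
  unfolding Pp_def by algebra

lemma edge1: assumes "i \<le> n" shows "Ft i n (n+1) = Gt i n (n+2) - Gt i n (n+1)"
proof -
  define g where "g = real ((2*n+1) choose n)"
  define b2 where "b2 = real ((2*n+2) choose (n+1))"
  define b3 where "b3 = real ((2*n+3) choose (n+1))"
  define h where "h = real (n choose i)"
  define h1 where "h1 = real ((n+1) choose i)"
  define H where "H = h / (real n + 1 - real i)"
  define K :: real where "K = 2^n / 4^(n+2)"
  have ni: "real n + 1 - real i > 0" using assms by simp
  have hb2: "b2 = 2*g"
  proof -
    have "Suc n * (Suc (2*n+1) choose Suc n) = Suc (2*n+1) * ((2*n+1) choose n)" by (rule Suc_times_binomial)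
    then have "real (n+1) * b2 = real (2*n+2) * g" unfolding b2_def g_def by (metis Suc_eq_plus1 add_Suc_right of_nat_mult one_add_one add.assoc)
    then have "(real n+1) * b2 = (real n+1) * (2*g)" by (simp add: algebra_simps)
    then show ?thesis by (simp add: add_nonneg_eq_0_iff)
  qed
  have hb3: "b3 = (2*real n+3)/(real n+2) * b2"
  proof -
    have "(2*n+3 - (n+1)) * ((2*n+3) choose (n+1)) = (2*n+3) * ((2*n+3-1) choose (n+1))" by (rule binomial_absorb_comp)
    moreover have "2*n+3 - (n+1) = n+2" "2*n+3-1 = 2*n+2" by auto
    ultimately have "real (n+2) * b3 = real (2*n+3) * b2" unfolding b3_def b2_def by (metis of_nat_mult)
    then have "(real n+2) * b3 = (2*real n+3) * b2" by (simp add: add.commute)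
    moreover have "real n + 2 \<noteq> 0" by (simp add: add_nonneg_eq_0_iff)
    ultimately show ?thesis by (simp add: field_simps)
  qed
  have hh1: "h1 = (real n+1)*H"
  proof -
    have "(n+1 - i) * ((n+1) choose i) = (n+1) * ((n+1-1) choose i)" by (rule binomial_absorb_comp)
    then have "real (n+1-i) * h1 = real (n+1) * h" unfolding h1_def h_def by (metis of_nat_mult diff_add_inverse2)
    then have "(real n + 1 - real i) * h1 = (real n+1) * h" using assms by (simp add: of_nat_diff add.commute)
    then show ?thesis unfolding H_def using ni by (simp add: field_simps)
  qed
  have hh: "h = (real n + 1 - real i)*H" unfolding H_def using ni by simp
  have p4: "(4::real)^(n+2) = 16 * 4^n" "(4::real)^(n+1) = 4 * 4^n" by (simp_all add: power_add)
  define T :: real where "T = 2^n"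
  define W :: real where "W = 4^n"
  have Wp: "W \<noteq> 0" by (simp add: W_def)
  have ta: "2*(real n+2) * tm i (n+2) (n+1) * W = T*g*H*(real n+1)*(2*real n+3)"
  proof -
    have le: "n+1 \<le> n+2" by simp
    have a: "2*(n+2)-2*(n+1) = 2" "n+2-(n+1) = 1" "n+2+(n+1) = 2*n+3" by auto
    have "tm i (n+2) (n+1) = 2^(n+1) * 2 * b3 * h1 / 4^(n+2)"
      unfolding tm_eq[OF le] a b3_def h1_def by simp
    then have "tm i (n+2) (n+1) * (16*W) = (2*T) * 2 * b3 * h1"
      unfolding T_def W_def p4(1)[symmetric] by simp
    moreover have "(real n+2)*b3 = (2*real n+3)*b2" using hb3 by (simp add: field_simps add_nonneg_eq_0_iff)
    ultimately show ?thesis using hb2 hh1 by algebra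
  qed
  have tb: "tm i (n+1) (n+1) * W = T*g*(real n+1)*H"
  proof -
    have le: "n+1 \<le> n+1" by simp
    have a: "2*(n+1)-2*(n+1) = 0" "n+1-(n+1) = 0" "n+1+(n+1) = 2*n+2" by auto
    have "tm i (n+1) (n+1) = 2^(n+1) * b2 * h1 / 4^(n+1)"
      unfolding tm_eq[OF le] a b2_def h1_def by simp
    then have "tm i (n+1) (n+1) * (4*W) = (2*T) * b2 * h1"
      unfolding T_def W_def p4(2)[symmetric] by simp
    then show ?thesis using hb2 hh1 by algebra
  qed
  have tc: "2 * tm i (n+1) n * W = T*g*(real n+1-real i)*H"
  proof -
    have le: "n \<le> n+1" by simp
    have a: "2*(n+1)-2*n = 2" "n+1-n = 1" "n+1+n = 2*n+1" by auto
    have "tm i (n+1) n = 2^n * 2 * g * h / 4^(n+1)"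
      unfolding tm_eq[OF le] a g_def h_def by simp
    then have "tm i (n+1) n * (4*W) = T * 2 * g * h"
      unfolding T_def W_def p4(2)[symmetric] by simp
    then show ?thesis using hh by algebra
  qed
  have t0: "tm i n (n+1) = 0" by (simp add: tm_def)
  have G2: "Gt i n (n+2) = - tm i (n+1) (n+1) * Pp (real n) (real i) (real n + 2)"
  proof -
    have "Gt i n (n+2) = tm i (n+1) (n+1) * Pp (real n) (real i) (real (n+2)) / (2*real n+3-2*real (n+2))"
      by (simp add: Gt_def)
    also have "2*real n+3-2*real (n+2) = -1" by simp
    finally show ?thesis by (simp add: add.commute)
  qed
  have G1: "Gt i n (n+1) = tm i (n+1) n * Pp (real n) (real i) (real n + 1)"
  proof -
    have "Gt i n (n+1) = tm i (n+1) n * Pp (real n) (real i) (real (n+1)) / (2*real n+3-2*real (n+1))"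
      by (simp add: Gt_def)
    also have "2*real n+3-2*real (n+1) = 1" by simp
    finally show ?thesis by (simp add: add.commute)
  qed
  note e = edge1_poly[where n="real n" and i="real i"]
  have n2: "real n + 2 \<noteq> 0" by (simp add: add_nonneg_eq_0_iff)
  show ?thesis unfolding Ft_def G1 G2 t0 using e n2 Wp ta tb tc unfolding Cc_def
    by algebra
qed


lemma edge2: assumes "i \<le> n" shows "Ft i n (n+2) = Gt i n (n+3) - Gt i n (n+2)"
proof -
  define b2 where "b2 = real ((2*n+2) choose (n+1))"
  define b4 where "b4 = real ((2*n+4) choose (n+2))"
  define h1 where "h1 = real ((n+1) choose i)"
  define h2 where "h2 = real ((n+2) choose i)"
  define T :: real where "T = 2^(n+1)"
  define W :: real where "W = 4^(n+1)"
  have Wp: "W \<noteq> 0" by (simp add: W_def)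
  have n2: "real n + 2 \<noteq> 0" by (simp add: add_nonneg_eq_0_iff)
  have hb4: "(real n+2)*b4 = 2*(2*real n+3)*b2"
  proof -
    have "real ((2*(n+1)+2) choose ((n+1)+1)) = 2*(2*real (n+1)+1)/(real (n+1)+1) * real ((2*(n+1)) choose (n+1))"
      by (rule B1)
    moreover have "2*(n+1)+2 = 2*n+4" "(n+1)+1 = n+2" "2*(n+1) = 2*n+2" by auto
    ultimately have "b4 = 2*(2*real n+3)/(real n+2) * b2" unfolding b4_def b2_def by (simp only:) (simp add: algebra_simps)
    then show ?thesis using n2 by (simp add: field_simps)
  qed
  have hh2: "(real n+2-real i)*h2 = (real n+2)*h1"
  proof -
    have "(n+2 - i) * ((n+2) choose i) = (n+2) * ((n+2-1) choose i)" by (rule binomial_absorb_comp)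
    moreover have "n+2-1 = n+1" by simp
    ultimately have "real (n+2-i) * h2 = real (n+2) * h1" unfolding h2_def h1_def by (metis of_nat_mult)
    then show ?thesis using assms by (simp add: of_nat_diff add.commute)
  qed
  have p4: "(4::real)^(n+2) = 4 * 4^(n+1)" "(2::real)^(n+2) = 2 * 2^(n+1)" by (simp_all add: power_add)
  have ta: "tm i (n+2) (n+2) * (4*W) = 2*T*b4*h2"
  proof -
    have le: "n+2 \<le> n+2" by simp
    have a: "2*(n+2)-2*(n+2) = 0" "n+2-(n+2) = 0" "n+2+(n+2) = 2*n+4" by auto
    have "tm i (n+2) (n+2) = 2^(n+2) * b4 * h2 / 4^(n+2)"
      unfolding tm_eq[OF le] a b4_def h2_def by simp
    then show ?thesis unfolding T_def W_def p4(1)[symmetric] p4(2)[symmetric] by simp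
  qed
  have tb: "tm i (n+1) (n+1) * W = T*b2*h1"
  proof -
    have le: "n+1 \<le> n+1" by simp
    have a: "2*(n+1)-2*(n+1) = 0" "n+1-(n+1) = 0" "n+1+(n+1) = 2*n+2" by auto
    have "tm i (n+1) (n+1) = 2^(n+1) * b2 * h1 / 4^(n+1)"
      unfolding tm_eq[OF le] a b2_def h1_def by simp
    then show ?thesis unfolding T_def W_def by simp
  qed
  have z: "tm i (n+1) (n+2) = 0" "tm i n (n+2) = 0" by (simp_all add: tm_def)
  have G3: "Gt i n (n+3) = 0" by (simp add: Gt_def tm_def)
  have G2: "Gt i n (n+2) = - tm i (n+1) (n+1) * Pp (real n) (real i) (real n + 2)"
  proof -
    have "Gt i n (n+2) = tm i (n+1) (n+1) * Pp (real n) (real i) (real (n+2)) / (2*real n+3-2*real (n+2))"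
      by (simp add: Gt_def)
    also have "2*real n+3-2*real (n+2) = -1" by simp
    finally show ?thesis by (simp add: add.commute)
  qed
  note e = edge2_poly[where n="real n" and i="real i"]
  show ?thesis unfolding Ft_def G3 G2 z using e n2 Wp ta tb hb4 hh2 unfolding Cc_def
    by algebra
qed


lemma bm_tm: assumes "m < N" shows "boros_moll i m = (\<Sum>k<N. tm i m k)"
proof -
  have "(\<Sum>k<N. tm i m k) = (\<Sum>k\<in>{k\<in>{..<N}. i \<le> k \<and> k \<le> m}. 2^k * real ((2*m-2*k) choose (m-k)) * real ((m+k) choose k) * real (k choose i) / 4^m)"
    unfolding tm_def by (subst sum.inter_filter) auto
  also have "{k\<in>{..<N}. i \<le> k \<and> k \<le> m} = {i..m}" using assms by auto
  also have "(\<Sum>k\<in>{i..m}. 2^k * real ((2*m-2*k) choose (m-k)) * real ((m+k) choose k) * real (k choose i) / 4^m)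
     = (\<Sum>k=i..m. 2 ^ k * real ((2*m - 2*k) choose (m - k)) * real ((m + k) choose k) * real (k choose i)) / 2^(2*m)"
    by (simp add: sum_divide_distrib power_mult)
  finally show ?thesis unfolding boros_moll_def by simp
qed

lemma FG: assumes "i \<le> n" "k < n+3" shows "Ft i n k = Gt i n (Suc k) - Gt i n k"
proof -
  consider "k < i" | "i \<le> k \<and> k \<le> n" | "k = n+1" | "k = n+2" using assms by linarith
  then show ?thesis
  proof cases
    case 1 then show ?thesis using low by simp
  next
    case 2 then show ?thesis using generic by simp
  next
    case 3 then show ?thesis using edge1[OF assms(1)] by (simp add: numeral_eq_Suc)
  next
    case 4 then show ?thesis using edge2[OF assms(1)] by (simp add: numeral_eq_Suc)
  qed
qed

theorem recur: assumes "i \<le> n"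
  shows "Cc (real i) (real n) * boros_moll i (n+2) = Aa (real i) (real n) * boros_moll i (n+1) - Bb (real i) (real n) * boros_moll i n"
proof -
  have "Cc (real i) (real n) * boros_moll i (n+2) - Aa (real i) (real n) * boros_moll i (n+1) + Bb (real i) (real n) * boros_moll i n
      = (\<Sum>k<n+3. Ft i n k)"
  proof -
    have e2: "boros_moll i (n+2) = (\<Sum>k<n+3. tm i (n+2) k)" by (rule bm_tm) simp
    have e1: "boros_moll i (n+1) = (\<Sum>k<n+3. tm i (n+1) k)" by (rule bm_tm) simp
    have e0: "boros_moll i n = (\<Sum>k<n+3. tm i n k)" by (rule bm_tm) simp
    show ?thesis unfolding e2 e1 e0 Ft_def
      by (simp only: sum.distrib sum_subtractf sum_distrib_left)
  qed
  also have "\<dots> = (\<Sum>k<n+3. Gt i n (Suc k) - Gt i n k)"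
    using FG[OF assms] by simp
  also have "\<dots> = Gt i n (n+3) - Gt i n 0" by (rule sum_lessThan_telescope)
  also have "\<dots> = 0" by (simp add: Gt_def tm_def)
  finally show ?thesis by simp
qed



definition LD :: "real \<Rightarrow> real \<Rightarrow> real" where "LD i m = (m-i)*(2*i*i+(m-i))"
definition LN :: "real \<Rightarrow> real \<Rightarrow> real" where "LN i m = 2*m*(2*i*i+(m-i)) - ((m-i)+2*i)"
definition Nh :: "real \<Rightarrow> real \<Rightarrow> real \<Rightarrow> real \<Rightarrow> real" where
  "Nh i m X D = Cc i m * (Cc i (m-1))^2 * X^4 - Cc i m * Cc i (m-1) * X^2 * (Aa i (m-1) * X - Bb i (m-1) * D) * D
     - Cc i m * (Aa i (m-1)*X - Bb i (m-1)*D)^2 * D^2 + Aa i m * Cc i (m-1) * X * (Aa i (m-1)*X - Bb i (m-1)*D) * D^2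
     - Bb i m * (Cc i (m-1))^2 * X^2 * D^2"

lemma Spos: fixes j p :: real assumes "0 \<le> j" "0 \<le> p"
  shows "0 < (Aa (1+j) (2+j+p-1) * LN (1+j) (2+j+p) - Bb (1+j) (2+j+p-1) * LD (1+j) (2+j+p)) * LD (1+j) (2+j+p+1)
           - LN (1+j) (2+j+p+1) * Cc (1+j) (2+j+p-1) * LN (1+j) (2+j+p)"
proof -
  have e: "(Aa (1+j) (2+j+p-1) * LN (1+j) (2+j+p) - Bb (1+j) (2+j+p-1) * LD (1+j) (2+j+p)) * LD (1+j) (2+j+p+1)
           - LN (1+j) (2+j+p+1) * Cc (1+j) (2+j+p-1) * LN (1+j) (2+j+p) = 360 + 630*p + 419*p^2 + 131*p^3 + 19*p^4 + p^5 + 2024*j + 3188*j*p + 1836*j*p^2 + 458*j*p^3 + 42*j*p^4 + 3764*j^2 + 5106*j^2*p + 2416*j^2*p^2 + 458*j^2*p^3 + 28*j^2*p^4 + 3264*j^3 + 3600*j^3*p + 1240*j^3*p^2 + 128*j^3*p^3 + 1464*j^4 + 1244*j^4*p + 264*j^4*p^2 + 4*j^4*p^3 + 336*j^5 + 216*j^5*p + 24*j^5*p^2 + 32*j^6 + 16*j^6*p"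
    unfolding LN_def LD_def Aa_def Bb_def Cc_def by algebra
  have "0 < 360 + 630*p + 419*p^2 + 131*p^3 + 19*p^4 + p^5 + 2024*j + 3188*j*p + 1836*j*p^2 + 458*j*p^3 + 42*j*p^4 + 3764*j^2 + 5106*j^2*p + 2416*j^2*p^2 + 458*j^2*p^3 + 28*j^2*p^4 + 3264*j^3 + 3600*j^3*p + 1240*j^3*p^2 + 128*j^3*p^3 + 1464*j^4 + 1244*j^4*p + 264*j^4*p^2 + 4*j^4*p^3 + 336*j^5 + 216*j^5*p + 24*j^5*p^2 + 32*j^6 + 16*j^6*p" using assms
    by (intro add_pos_nonneg add_nonneg_nonneg mult_nonneg_nonneg zero_le_power; simp)
  then show ?thesis using e by simp
qed

lemma Npos: fixes j p s :: real assumes "0 \<le> j" "0 \<le> p" "0 \<le> s"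
  shows "0 < Nh (1+j) (2+j+p) (LN (1+j) (2+j+p) + s * LD (1+j) (2+j+p)) (LD (1+j) (2+j+p))"
proof -
  have e: "Nh (1+j) (2+j+p) (LN (1+j) (2+j+p) + s * LD (1+j) (2+j+p)) (LD (1+j) (2+j+p)) = 179403984 + 491217696*s + 507337344*s^2 + 217230336*s^3 + 26873856*s^4 + 1069329276*p + 3312645984*p*s + 3851779392*p*s^2 + 1827608832*p*s^3 + 239625216*p*s^4 + 2944687608*p^2 + 10288575288*p^2*s + 13498459488*p^2*s^2 + 7122784896*p^2*s^3 + 988360704*p^2*s^4 + 4968523800*p^3 + 19539094104*p^3*s + 29007336816*p^3*s^2 + 17090491968*p^3*s^3 + 2505364992*p^3*s^4 + 5741230104*p^4 + 25392564072*p^4*s + 42814519488*p^4*s^2 + 28296206496*p^4*s^3 + 4373367552*p^4*s^4 + 4807909332*p^5 + 23934129480*p^5*s + 46057029552*p^5*s^2 + 34331685408*p^5*s^3 + 5582025792*p^5*s^4 + 3009997872*p^6 + 16910930352*p^6*s + 37378062272*p^6*s^2 + 31631381472*p^6*s^3 + 5397693696*p^6*s^4 + 1431399696*p^7 + 9124048304*p^7*s + 23359186976*p^7*s^2 + 22620629536*p^7*s^3 + 4041522816*p^7*s^4 + 519652928*p^8 + 3791052912*p^8*s + 11367516800*p^8*s^2 + 12720045376*p^8*s^3 + 2373720064*p^8*s^4 + 143331364*p^9 + 1213303664*p^9*s + 4324406560*p^9*s^2 + 5659913024*p^9*s^3 + 1100552128*p^9*s^4 + 29567768*p^10 + 296692376*p^10*s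 + 1282402912*p^10*s^2 + 1993949248*p^10*s^3 + 403046912*p^10*s^4 + 4423640*p^11 + 54439608*p^11*s + 293485360*p^11*s^2 + 553291904*p^11*s^3 + 115996928*p^11*s^4 + 453720*p^12 + 7255176*p^12*s + 50838080*p^12*s^2 + 119505696*p^12*s^3 + 25928448*p^12*s^4 + 28556*p^13 + 662888*p^13*s + 6446576*p^13*s^2 + 19678880*p^13*s^3 + 4409280*p^13*s^4 + 832*p^14 + 37120*p^14*s + 564608*p^14*s^2 + 2386784*p^14*s^3 + 551168*p^14*s^4 + 960*p^15*s + 30528*p^15*s^2 + 200992*p^15*s^3 + 47744*p^15*s^4 + 768*p^16*s^2 + 10496*p^16*s^3 + 2560*p^16*s^4 + 256*p^17*s^3 + 64*p^17*s^4 + 2488488156*j + 5922812016*j*s + 5247649152*j*s^2 + 1897406208*j*s^3 + 203793408*j*s^4 + 13932092988*j*p + 37694384856*j*p*s + 37806323616*j*p*s^2 + 15210695808*j*p*s^3 + 1745307648*j*p*s^4 + 35883485676*j*p^2 + 109848870792*j*p^2*s + 125034754896*j*p^2*s^2 + 56195052480*j*p^2*s^3 + 6880453632*j*p^2*s^4 + 56362709844*j*p^3 + 194487442920*j*p^3*s + 252033093360*j*p^3*s^2 + 127095016032*j*p^3*s^3 + 16579033344*j*p^3*s^4 + 60311125008*j*p^4 + 233915664648*j*p^4*s + 346564068864*j*p^4*s^2 + 197113304736*j*p^4*s^3 + 27341088192*j*p^4*s^4 + 46493343912*j*p^5 + 202315223216*j*p^5*s + 344629257376*j*p^5*s^2 +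 222467274144*j*p^5*s^3 + 32739356736*j*p^5*s^4 + 26611184296*j*p^6 + 129841915344*j*p^6*s + 256214997088*j*p^6*s^2 + 189161282976*j*p^6*s^3 + 29463819456*j*p^6*s^4 + 11477057848*j*p^7 + 62843950480*j*p^7*s + 145111871392*j*p^7*s^2 + 123703676864*j*p^7*s^3 + 20341682368*j*p^7*s^4 + 3742649164*j*p^8 + 23059785792*j*p^8*s + 63165203648*j*p^8*s^2 + 62925528640*j*p^8*s^3 + 10895473920*j*p^8*s^4 + 916422620*j*p^9 + 6385644920*j*p^9*s + 21143699616*j*p^9*s^2 + 24998149056*j*p^9*s^3 + 4545728128*j*p^9*s^4 + 165366380*j*p^10 + 1313923048*j*p^10*s + 5401163344*j*p^10*s^2 + 7734945536*j*p^10*s^3 + 1473330560*j*p^10*s^4 + 21230580*j*p^11 + 194829064*j*p^11*s + 1034541552*j*p^11*s^2 + 1845605344*j*p^11*s^3 + 367300224*j*p^11*s^4 + 1820872*j*p^12 + 19681992*j*p^12*s + 143895360*j*p^12*s^2 + 333084448*j*p^12*s^3 + 69087168*j*p^12*s^4 + 92352*j*p^13 + 1212544*j*p^13*s + 13727136*j*p^13*s^2 + 43975712*j*p^13*s^3 + 9483584*j*p^13*s^4 + 2048*j*p^14 + 34368*j*p^14*s + 803456*j*p^14*s^2 + 4007328*j*p^14*s^3 + 896448*j*p^14*s^4 + 21760*j*p^15*s^2 + 225280*j*p^15*s^3 + 52160*j*p^15*s^4 + 5888*j*p^16*s^3 + 1408*j*p^16*s^4 + 15787979892*j^2 + 32957128368*j^2*s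 + 25261450560*j^2*s^2 + 7831489536*j^2*s^3 + 736791552*j^2*s^4 + 82673848692*j^2*p + 197877846672*j^2*p*s + 172913066064*j^2*p*s^2 + 59968247616*j^2*p*s^3 + 6074797824*j^2*p*s^4 + 198103160052*j^2*p^2 + 540735776568*j^2*p^2*s + 540311435280*j^2*p^2*s^2 + 210533922144*j^2*p^2*s^3 + 22947473664*j^2*p^2*s^4 + 287735074188*j^2*p^3 + 891734545032*j^2*p^3*s + 1022749857888*j^2*p^3*s^2 + 449948754144*j^2*p^3*s^3 + 52703524800*j^2*p^3*s^4 + 282706271144*j^2*p^4 + 991383289664*j^2*p^4*s + 1311727559840*j^2*p^4*s^2 + 655362399168*j^2*p^4*s^3 + 82353405888*j^2*p^4*s^4 + 198438741576*j^2*p^5 + 785565434816*j^2*p^5*s + 1207306616224*j^2*p^5*s^2 + 689907628992*j^2*p^5*s^3 + 92813859072*j^2*p^5*s^4 + 102368686024*j^2*p^6 + 457004179184*j^2*p^6*s + 823401111712*j^2*p^6*s^2 + 542965063616*j^2*p^6*s^3 + 78018468288*j^2*p^6*s^4 + 39285946072*j^2*p^7 + 197903342928*j^2*p^7*s + 423339493184*j^2*p^7*s^2 + 325765607104*j^2*p^7*s^3 + 49870307392*j^2*p^7*s^4 + 11210570276*j^2*p^8 + 63909487024*j^2*p^8*s + 165168015744*j^2*p^8*s^2 + 150469786624*j^2*p^8*s^3 + 24477582720*j^2*p^8*s^4 + 2347598916*j^2*p^9 + 15241980752*j^2*p^9*s + 48779295504*j^2*p^9*s^2 + 53611352128*j^2*p^9*s^3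 + 9243286784*j^2*p^9*s^4 + 350296388*j^2*p^10 + 2621941400*j^2*p^10*s + 10773118544*j^2*p^10*s^2 + 14652396384*j^2*p^10*s^3 + 2670703232*j^2*p^10*s^4 + 35218012*j^2*p^11 + 311174760*j^2*p^11*s + 1736205024*j^2*p^11*s^2 + 3028634592*j^2*p^11*s^3 + 582200896*j^2*p^11*s^4 + 2133952*j^2*p^12 + 23454624*j^2*p^12*s + 195508256*j^2*p^12*s^2 + 461410112*j^2*p^12*s^3 + 93347008*j^2*p^12*s^4 + 58688*j^2*p^13 + 944160*j^2*p^13*s + 14230400*j^2*p^13*s^2 + 49588672*j^2*p^13*s^3 + 10540800*j^2*p^13*s^4 + 12288*j^2*p^14*s + 572800*j^2*p^14*s^2 + 3480704*j^2*p^14*s^3 + 776896*j^2*p^14*s^4 + 8448*j^2*p^15*s^2 + 137088*j^2*p^15*s^3 + 32192*j^2*p^15*s^4 + 2048*j^2*p^16*s^3 + 512*j^2*p^16*s^4 + 61307991504*j^3 + 112826242656*j^3*s + 75295544112*j^3*s^2 + 20210751936*j^3*s^3 + 1673581824*j^3*s^4 + 299476772856*j^3*p + 638985566808*j^3*p*s + 490137423408*j^3*p*s^2 + 148080229920*j^3*p*s^3 + 13305876480*j^3*p*s^4 + 665429580864*j^3*p^2 + 1636602246648*j^3*p^2*s + 1448111085696*j^3*p^2*s^2 + 494814530592*j^3*p^2*s^3 + 48239337024*j^3*p^2*s^4 + 890097745728*j^3*p^3 + 2511895149408*j^3*p^3*s + 2575422598304*j^3*p^3*s^2 + 1000728886848*j^3*p^3*s^3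 + 105765287616*j^3*p^3*s^4 + 798945925120*j^3*p^4 + 2578321771168*j^3*p^4*s + 3081716259296*j^3*p^4*s^2 + 1370581430720*j^3*p^4*s^3 + 156821116800*j^3*p^4*s^4 + 507405341136*j^3*p^5 + 1868693029168*j^3*p^5*s + 2625281704864*j^3*p^5*s^2 + 1347140218944*j^3*p^5*s^3 + 166565159552*j^3*p^5*s^4 + 234040952480*j^3*p^6 + 983200823024*j^3*p^6*s + 1641963639616*j^3*p^6*s^2 + 982027119680*j^3*p^6*s^3 + 130921505408*j^3*p^6*s^4 + 79109564192*j^3*p^7 + 379734270272*j^3*p^7*s + 765694958848*j^3*p^7*s^2 + 540738853888*j^3*p^7*s^3 + 77541265024*j^3*p^7*s^4 + 19493299120*j^3*p^8 + 107429115296*j^3*p^8*s + 267333725232*j^3*p^8*s^2 + 226743705536*j^3*p^8*s^3 + 34883766016*j^3*p^8*s^4 + 3429583480*j^3*p^9 + 21913466552*j^3*p^9*s + 69454019120*j^3*p^9*s^2 + 72374722592*j^3*p^9*s^3 + 11914808832*j^3*p^9*s^4 + 412847008*j^3*p^10 + 3115993432*j^3*p^10*s + 13191088320*j^3*p^10*s^2 + 17426076448*j^3*p^10*s^3 + 3061985856*j^3*p^10*s^4 + 31338848*j^3*p^11 + 289934112*j^3*p^11*s + 1770484192*j^3*p^11*s^2 + 3103381184*j^3*p^11*s^3 + 580624576*j^3*p^11*s^4 + 1262592*j^3*p^12 + 15577888*j^3*p^12*s + 157975104*j^3*p^12*s^2 + 394712000*j^3*p^12*s^3 + 78462592*j^3*p^12*s^4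 + 16384*j^3*p^13 + 353792*j^3*p^13*s + 8321152*j^3*p^13*s^2 + 33712256*j^3*p^13*s^3 + 7107968*j^3*p^13*s^4 + 192512*j^3*p^14*s^2 + 1717632*j^3*p^14*s^3 + 383744*j^3*p^14*s^4 + 38912*j^3*p^15*s^3 + 9216*j^3*p^15*s^4 + 163924692192*j^4 + 266758457184*j^4*s + 155681535312*j^4*s^2 + 36390404736*j^4*s^3 + 2656634112*j^4*s^4 + 745328568528*j^4*p + 1424699538384*j^4*p*s + 964385312496*j^4*p*s^2 + 255435410304*j^4*p*s^3 + 20391899904*j^4*p*s^4 + 1531508575488*j^4*p^2 + 3417806591360*j^4*p^2*s + 2694948723040*j^4*p^2*s^2 + 813239890272*j^4*p^2*s^3 + 71030889792*j^4*p^2*s^4 + 1880221650400*j^4*p^3 + 4876742252992*j^4*p^3*s + 4503130611776*j^4*p^3*s^2 + 1557591123744*j^4*p^3*s^3 + 148810897536*j^4*p^3*s^4 + 1535191931680*j^4*p^4 + 4614084496800*j^4*p^4*s + 5025187577888*j^4*p^4*s^2 + 2006751791232*j^4*p^4*s^3 + 209520384128*j^4*p^4*s^4 + 877358270688*j^4*p^5 + 3051733744576*j^4*p^5*s + 3958774216032*j^4*p^5*s^2 + 1841640202624*j^4*p^5*s^3 + 209812254144*j^4*p^5*s^4 + 359289873056*j^4*p^6 + 1447489501280*j^4*p^6*s + 2267196608960*j^4*p^6*s^2 + 1242879547968*j^4*p^6*s^3 + 154203731840*j^4*p^6*s^4 + 105970376768*j^4*p^7 + 496319617312*j^4*p^7*s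 + 956690248960*j^4*p^7*s^2 + 627365673152*j^4*p^7*s^3 + 84574520832*j^4*p^7*s^4 + 22258958080*j^4*p^8 + 122179880064*j^4*p^8*s + 297821942416*j^4*p^8*s^2 + 238328982272*j^4*p^8*s^3 + 34824649984*j^4*p^8*s^4 + 3228634192*j^4*p^9 + 21094567024*j^4*p^9*s + 67686394928*j^4*p^9*s^2 + 67922387200*j^4*p^9*s^3 + 10730775424*j^4*p^9*s^4 + 304111200*j^4*p^10 + 2436847520*j^4*p^10*s + 10956933728*j^4*p^10*s^2 + 14330680160*j^4*p^10*s^3 + 2441996096*j^4*p^10*s^4 + 16429024*j^4*p^11 + 172121376*j^4*p^11*s + 1206605888*j^4*p^11*s^2 + 2180160800*j^4*p^11*s^3 + 399837568*j^4*p^11*s^4 + 372480*j^4*p^12 + 6127872*j^4*p^12*s + 83025536*j^4*p^12*s^2 + 228248320*j^4*p^12*s^3 + 44978048*j^4*p^12*s^4 + 60416*j^4*p^13*s + 2990592*j^4*p^13*s^2 + 15113472*j^4*p^13*s^3 + 3198400*j^4*p^13*s^4 + 33792*j^4*p^14*s^2 + 532480*j^4*p^14*s^3 + 121344*j^4*p^14*s^4 + 6144*j^4*p^15*s^3 + 1536*j^4*p^15*s^4 + 321199914336*j^5 + 462881323392*j^5*s + 236800197888*j^5*s^2 + 48321261504*j^5*s^3 + 3105983232*j^5*s^4 + 1356343378928*j^5*p + 2330197546688*j^5*p*s + 1396443185792*j^5*p*s^2 + 325229105952*j^5*p*s^3 + 23037378048*j^5*p*s^4 + 2570103252112*j^5*p^2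 + 5230523631872*j^5*p^2*s + 3690803161024*j^5*p^2*s^2 + 987114744480*j^5*p^2*s^3 + 77154310080*j^5*p^2*s^4 + 2885660230096*j^5*p^3 + 6927165678496*j^5*p^3*s + 5791322956352*j^5*p^3*s^2 + 1790794958720*j^5*p^3*s^3 + 154522286784*j^5*p^3*s^4 + 2133521448976*j^5*p^4 + 6027480836512*j^5*p^4*s + 6020680593600*j^5*p^4*s^2 + 2169777362688*j^5*p^4*s^3 + 206614058624*j^5*p^4*s^4 + 1090767420784*j^5*p^5 + 3626363840160*j^5*p^5*s + 4378476799424*j^5*p^5*s^2 + 1857606600896*j^5*p^5*s^3 + 194999065344*j^5*p^5*s^4 + 393506876976*j^5*p^6 + 1543732239648*j^5*p^6*s + 2290093718592*j^5*p^6*s^2 + 1158767811776*j^5*p^6*s^3 + 133875802240*j^5*p^6*s^4 + 100203018224*j^5*p^7 + 466953174496*j^5*p^7*s + 871065741888*j^5*p^7*s^2 + 534811082112*j^5*p^7*s^3 + 67867156608*j^5*p^7*s^4 + 17670987088*j^5*p^8 + 99090303328*j^5*p^8*s + 240407839808*j^5*p^8*s^2 + 183344193856*j^5*p^8*s^3 + 25498382592*j^5*p^8*s^4 + 2064319456*j^5*p^9 + 14268340256*j^5*p^9*s + 47383687360*j^5*p^9*s^2 + 46380009760*j^5*p^9*s^3 + 7052922624*j^5*p^9*s^4 + 146134656*j^5*p^10 + 1305350496*j^5*p^10*s + 6447196928*j^5*p^10*s^2 + 8497725344*j^5*p^10*s^3 + 1409891776*j^5*p^10*s^4 + 5160192*j^5*p^11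 + 66455808*j^5*p^11*s + 568385152*j^5*p^11*s^2 + 1088403968*j^5*p^11*s^3 + 196655808*j^5*p^11*s^4 + 49152*j^5*p^12 + 1350656*j^5*p^12*s + 28653312*j^5*p^12*s^2 + 91416832*j^5*p^12*s^3 + 17965952*j^5*p^12*s^4 + 605184*j^5*p^13*s^2 + 4447232*j^5*p^13*s^3 + 950784*j^5*p^13*s^4 + 92160*j^5*p^14*s^3 + 21504*j^5*p^14*s^4 + 478622545632*j^6 + 610847650752*j^6*s + 274002725376*j^6*s^2 + 48779751936*j^6*s^3 + 2748586752*j^6*s^4 + 1872210655776*j^6*p + 2896249303424*j^6*p*s + 1538366603136*j^6*p*s^2 + 314976232960*j^6*p*s^3 + 19710716928*j^6*p*s^4 + 3260674125600*j^6*p^2 + 6073994369536*j^6*p^2*s + 3843815434496*j^6*p^2*s^2 + 911508311936*j^6*p^2*s^3 + 63491505088*j^6*p^2*s^4 + 3334048531776*j^6*p^3 + 7449827954688*j^6*p^3*s + 5657876064384*j^6*p^3*s^2 + 1565774179968*j^6*p^3*s^3 + 121559559232*j^6*p^3*s^4 + 2220038730464*j^6*p^4 + 5942863464576*j^6*p^4*s + 5469909198976*j^6*p^4*s^2 + 1782386026240*j^6*p^4*s^3 + 154286259968*j^6*p^4*s^4 + 1008153420928*j^6*p^5 + 3238473406464*j^6*p^5*s + 3662429092224*j^6*p^5*s^2 + 1421026828032*j^6*p^5*s^3 + 137082298624*j^6*p^5*s^4 + 317356392032*j^6*p^6 + 1229941083392*j^6*p^6*s + 1742747757184*j^6*p^6*s^2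 + 817081740800*j^6*p^6*s^3 + 87739593344*j^6*p^6*s^4 + 68843433920*j^6*p^7 + 325424082688*j^6*p^7*s + 594241807744*j^6*p^7*s^2 + 343409200128*j^6*p^7*s^3 + 40982038912*j^6*p^7*s^4 + 9993149632*j^6*p^8 + 58777508288*j^6*p^8*s + 144246062464*j^6*p^8*s^2 + 105614646016*j^6*p^8*s^3 + 13981498368*j^6*p^8*s^4 + 910425184*j^6*p^9 + 6916102784*j^6*p^9*s + 24359983360*j^6*p^9*s^2 + 23511232256*j^6*p^9*s^3 + 3446181632*j^6*p^9*s^4 + 45555712*j^6*p^10 + 482960128*j^6*p^10*s + 2732300928*j^6*p^10*s^2 + 3692808832*j^6*p^10*s^3 + 598323136*j^6*p^10*s^4 + 891904*j^6*p^11 + 16325888*j^6*p^11*s + 186249216*j^6*p^11*s^2 + 390149504*j^6*p^11*s^3 + 69803072*j^6*p^11*s^4 + 139264*j^6*p^12*s + 6382080*j^6*p^12*s^2 + 25371648*j^6*p^12*s^3 + 5014528*j^6*p^12*s^4 + 61440*j^6*p^13*s^2 + 842752*j^6*p^13*s^3 + 184832*j^6*p^13*s^4 + 8192*j^6*p^14*s^3 + 2048*j^6*p^14*s^4 + 555000261184*j^7 + 626385405952*j^7*s + 245855619328*j^7*s^2 + 38037709056*j^7*s^3 + 1863929856*j^7*s^4 + 2004639957920*j^7*p + 2793989401664*j^7*p*s + 1313858333632*j^7*p*s^2 + 235680425344*j^7*p*s^3 + 12927047680*j^7*p*s^4 + 3195719390592*j^7*p^2 + 5463373932224*j^7*p^2*s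 + 3100769410752*j^7*p^2*s^2 + 650103792768*j^7*p^2*s^3 + 40047633408*j^7*p^2*s^4 + 2960034395872*j^7*p^3 + 6187133162304*j^7*p^3*s + 4274316033344*j^7*p^3*s^2 + 1056404832000*j^7*p^3*s^3 + 73260253696*j^7*p^3*s^4 + 1762911593664*j^7*p^4 + 4506101303232*j^7*p^4*s + 3832827339200*j^7*p^4*s^2 + 1127803279616*j^7*p^4*s^3 + 88159445504*j^7*p^4*s^4 + 704648687584*j^7*p^5 + 2211471420352*j^7*p^5*s + 2353857534144*j^7*p^5*s^2 + 834957101568*j^7*p^5*s^3 + 73588998656*j^7*p^5*s^4 + 191162170624*j^7*p^6 + 743425526080*j^7*p^6*s + 1013592651072*j^7*p^6*s^2 + 440679756800*j^7*p^6*s^3 + 43768218112*j^7*p^6*s^4 + 34705846048*j^7*p^7 + 170114072000*j^7*p^7*s + 307492462016*j^7*p^7*s^2 + 167644354816*j^7*p^7*s^3 + 18744008192*j^7*p^7*s^4 + 4035426432*j^7*p^8 + 25704627008*j^7*p^8*s + 64926683200*j^7*p^8*s^2 + 45855431168*j^7*p^8*s^3 + 5764384256*j^7*p^8*s^4 + 273597056*j^7*p^9 + 2401394432*j^7*p^9*s + 9236920960*j^7*p^9*s^2 + 8870598784*j^7*p^9*s^3 + 1252232704*j^7*p^9*s^4 + 8755712*j^7*p^10 + 120980736*j^7*p^10*s + 830134528*j^7*p^10*s^2 + 1171672960*j^7*p^10*s^3 + 185602560*j^7*p^10*s^4 + 65536*j^7*p^11 + 2324480*j^7*p^11*s + 41379328*j^7*p^11*s^2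 + 98926592*j^7*p^11*s^3 + 17590272*j^7*p^11*s^4 + 825344*j^7*p^12*s^2 + 4686848*j^7*p^12*s^3 + 937984*j^7*p^12*s^4 + 90112*j^7*p^13*s^3 + 20480*j^7*p^13*s^4 + 507918863808*j^8 + 505284170624*j^8*s + 172715310976*j^8*s^2 + 23048346624*j^8*s^3 + 970014720*j^8*s^4 + 1687217398272*j^8*p + 2116929425792*j^8*p*s + 878033911040*j^8*p*s^2 + 137008517120*j^8*p*s^3 + 6505652224*j^8*p*s^4 + 2448998025152*j^8*p^2 + 3849005379456*j^8*p^2*s + 1954511367424*j^8*p^2*s^2 + 359946865408*j^8*p^2*s^3 + 19373549568*j^8*p^2*s^4 + 2040765471424*j^8*p^3 + 4008693074816*j^8*p^3*s + 2517033201664*j^8*p^3*s^2 + 552392979200*j^8*p^3*s^3 + 33823459328*j^8*p^3*s^4 + 1077337454656*j^8*p^4 + 2650872854784*j^8*p^4*s + 2085849210880*j^8*p^4*s^2 + 551538086144*j^8*p^4*s^3 + 38511222272*j^8*p^4*s^4 + 374467227456*j^8*p^5 + 1162885053952*j^8*p^5*s + 1168840779776*j^8*p^5*s^2 + 377568986368*j^8*p^5*s^3 + 30101193216*j^8*p^5*s^4 + 86089041984*j^8*p^6 + 342409644928*j^8*p^6*s + 452144879872*j^8*p^6*s^2 + 181790235392*j^8*p^6*s^3 + 16552820224*j^8*p^6*s^4 + 12761590848*j^8*p^7 + 66735101312*j^8*p^7*s + 120771621888*j^8*p^7*s^2 + 62046406400*j^8*p^7*s^3 + 6451066368*j^8*p^7*s^4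 + 1142429184*j^8*p^8 + 8237290624*j^8*p^8*s + 21843580032*j^8*p^8*s^2 + 14903176960*j^8*p^8*s^3 + 1768649216*j^8*p^8*s^4 + 53529536*j^8*p^9 + 585978752*j^8*p^9*s + 2555389696*j^8*p^9*s^2 + 2458507008*j^8*p^9*s^3 + 333009408*j^8*p^9*s^4 + 905216*j^8*p^10 + 19444736*j^8*p^10*s + 176375296*j^8*p^10*s^2 + 265170432*j^8*p^10*s^3 + 41034240*j^8*p^10*s^4 + 150528*j^8*p^11*s + 5869568*j^8*p^11*s^2 + 17009152*j^8*p^11*s^3 + 3017216*j^8*p^11*s^4 + 49152*j^8*p^12*s^2 + 528384*j^8*p^12*s^3 + 108544*j^8*p^12*s^4 + 4096*j^8*p^13*s^3 + 1024*j^8*p^13*s^4 + 369681257920*j^9 + 322391282688*j^9*s + 95204046080*j^9*s^2 + 10826697216*j^9*s^3 + 384141312*j^9*s^4 + 1123608947328*j^9*p + 1265967026688*j^9*p*s + 459966686592*j^9*p*s^2 + 61710128896*j^9*p*s^3 + 2490187776*j^9*p*s^4 + 1474817201920*j^9*p^2 + 2132566728704*j^9*p^2*s + 963781394176*j^9*p^2*s^2 + 154198443776*j^9*p^2*s^3 + 7120626176*j^9*p^2*s^4 + 1095648079680*j^9*p^3 + 2031919278208*j^9*p^3*s + 1155643492992*j^9*p^3*s^2 + 222922661120*j^9*p^3*s^3 + 11840904704*j^9*p^3*s^4 + 506496121664*j^9*p^4 + 1211204108672*j^9*p^4*s + 880615166976*j^9*p^4*s^2 + 207315176704*j^9*p^4*s^3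 + 12714574336*j^9*p^4*s^4 + 150564021504*j^9*p^5 + 470207719168*j^9*p^5*s + 447063876224*j^9*p^5*s^2 + 130424022784*j^9*p^5*s^3 + 9258174976*j^9*p^5*s^4 + 28641800832*j^9*p^6 + 119568026368*j^9*p^6*s + 153792668416*j^9*p^6*s^2 + 56769303296*j^9*p^6*s^3 + 4670670336*j^9*p^6*s^4 + 3342168384*j^9*p^7 + 19435623040*j^9*p^7*s + 35643622784*j^9*p^7*s^2 + 17155796736*j^9*p^7*s^3 + 1637297664*j^9*p^7*s^4 + 216321408*j^9*p^8 + 1893878656*j^9*p^8*s + 5401041152*j^9*p^8*s^2 + 3548583168*j^9*p^8*s^3 + 393172480*j^9*p^8*s^4 + 6127616*j^9*p^9 + 96148480*j^9*p^9*s + 500951040*j^9*p^9*s^2 + 484410880*j^9*p^9*s^3 + 62410240*j^9*p^9*s^4 + 32768*j^9*p^10 + 1770496*j^9*p^10*s + 24771584*j^9*p^10*s^2 + 40585728*j^9*p^10*s^3 + 6103040*j^9*p^10*s^4 + 458752*j^9*p^11*s^2 + 1798144*j^9*p^11*s^3 + 318464*j^9*p^11*s^4 + 28672*j^9*p^12*s^3 + 6144*j^9*p^12*s^4 + 214514571584*j^10 + 162635468288*j^10*s + 40988583936*j^10*s^2 + 3901022208*j^10*s^3 + 113534976*j^10*s^4 + 592680068928*j^10*p + 596951795200*j^10*p*s + 187936503296*j^10*p*s^2 + 21298646016*j^10*p*s^3 + 710680576*j^10*p*s^4 + 697161546304*j^10*p^2 + 927300724096*j^10*p^2*s + 369644974848*j^10*p^2*s^2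 + 50513601024*j^10*p^2*s^3 + 1947822592*j^10*p^2*s^4 + 456111887680*j^10*p^3 + 802768772736*j^10*p^3*s + 410816485632*j^10*p^3*s^2 + 68544086528*j^10*p^3*s^3 + 3075755520*j^10*p^3*s^4 + 181553731520*j^10*p^4 + 427223696640*j^10*p^4*s + 285902531072*j^10*p^4*s^2 + 59028046848*j^10*p^4*s^3 + 3099366912*j^10*p^4*s^4 + 45065554880*j^10*p^5 + 144817113856*j^10*p^5*s + 130206566400*j^10*p^5*s^2 + 33822124032*j^10*p^5*s^3 + 2086162944*j^10*p^5*s^4 + 6843376832*j^10*p^6 + 31191766400*j^10*p^6*s + 39268985600*j^10*p^6*s^2 + 13130809856*j^10*p^6*s^3 + 953952768*j^10*p^6*s^4 + 592503744*j^10*p^7 + 4104169088*j^10*p^7*s + 7730631936*j^10*p^7*s^2 + 3442661888*j^10*p^7*s^3 + 295185920*j^10*p^7*s^4 + 24731648*j^10*p^8 + 299860480*j^10*p^8*s + 948793344*j^10*p^8*s^2 + 593997824*j^10*p^8*s^3 + 60242432*j^10*p^8*s^4 + 310272*j^10*p^9 + 9730560*j^10*p^9*s + 65709056*j^10*p^9*s^2 + 63608832*j^10*p^9*s^3 + 7656960*j^10*p^9*s^4 + 65536*j^10*p^10*s + 2039808*j^10*p^10*s^2 + 3737600*j^10*p^10*s^3 + 537600*j^10*p^10*s^4 + 12288*j^10*p^11*s^2 + 88064*j^10*p^11*s^3 + 15360*j^10*p^11*s^4 + 99002591744*j^11 + 64469172736*j^11*s + 13620489472*j^11*s^2 + 1056267264*j^11*s^3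 + 24195072*j^11*s^4 + 246577365248*j^11*p + 220430115200*j^11*p*s + 59154907648*j^11*p*s^2 + 5515827712*j^11*p*s^3 + 146022400*j^11*p*s^4 + 256822672640*j^11*p^2 + 313852859264*j^11*p^2*s + 108815941888*j^11*p^2*s^2 + 12380849664*j^11*p^2*s^3 + 382606336*j^11*p^2*s^4 + 145485815040*j^11*p^3 + 244651609856*j^11*p^3*s + 111410892800*j^11*p^3*s^2 + 15690067968*j^11*p^3*s^3 + 571218944*j^11*p^3*s^4 + 48669215488*j^11*p^4 + 114764140800*j^11*p^4*s + 70156586752*j^11*p^4*s^2 + 12409796608*j^11*p^4*s^3 + 536340480*j^11*p^4*s^4 + 9727836672*j^11*p^5 + 33352105344*j^11*p^5*s + 28270242304*j^11*p^5*s^2 + 6392898048*j^11*p^5*s^3 + 329891840*j^11*p^5*s^4 + 1111621120*j^11*p^6 + 5921163136*j^11*p^6*s + 7321993984*j^11*p^6*s^2 + 2169191936*j^11*p^6*s^3 + 134208512*j^11*p^6*s^4 + 63924224*j^11*p^7 + 603408896*j^11*p^7*s + 1185371136*j^11*p^7*s^2 + 477576192*j^11*p^7*s^3 + 35544064*j^11*p^7*s^4 + 1300480*j^11*p^8 + 30411264*j^11*p^8*s + 111489024*j^11*p^8*s^2 + 65015808*j^11*p^8*s^3 + 5840896*j^11*p^8*s^4 + 507904*j^11*p^9*s + 5160960*j^11*p^9*s^2 + 4904960*j^11*p^9*s^3 + 534528*j^11*p^9*s^4 + 73728*j^11*p^10*s^2 + 153600*j^11*p^10*s^3 + 20480*j^11*p^10*s^4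 + 36068685056*j^12 + 19825511424*j^12*s + 3420135680*j^12*s^2 + 207562752*j^12*s^3 + 3502080*j^12*s^4 + 80110430720*j^12*p + 62877260032*j^12*p*s + 14035468544*j^12*p*s^2 + 1034618880*j^12*p*s^3 + 20336640*j^12*p*s^4 + 72679977984*j^12*p^2 + 81422070272*j^12*p^2*s + 24032025088*j^12*p^2*s^2 + 2189569536*j^12*p^2*s^3 + 50764800*j^12*p^2*s^4 + 34796148224*j^12*p^3 + 56474859520*j^12*p^3*s + 22483848704*j^12*p^3*s^2 + 2574148096*j^12*p^3*s^3 + 71239680*j^12*p^3*s^4 + 9429860096*j^12*p^4 + 22951956480*j^12*p^4*s + 12648026368*j^12*p^4*s^2 + 1848787968*j^12*p^4*s^3 + 61716480*j^12*p^4*s^4 + 1429522432*j^12*p^5 + 5575768320*j^12*p^5*s + 4421314816*j^12*p^5*s^2 + 840285184*j^12*p^5*s^3 + 34114560*j^12*p^5*s^4 + 109926400*j^12*p^6 + 784419328*j^12*p^6*s + 953127936*j^12*p^6*s^2 + 241468928*j^12*p^6*s^3 + 11996160*j^12*p^6*s^4 + 3176448*j^12*p^7 + 57789952*j^12*p^7*s + 120313856*j^12*p^7*s^2 + 42244608*j^12*p^7*s^3 + 2580480*j^12*p^7*s^4 + 1728512*j^12*p^8*s + 7815168*j^12*p^8*s^2 + 4071424*j^12*p^8*s^3 + 307200*j^12*p^8*s^4 + 8192*j^12*p^9*s + 184320*j^12*p^9*s^2 + 163840*j^12*p^9*s^3 + 15360*j^12*p^9*s^4 + 10231346176*j^13 +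 4628169728*j^13*s + 626555904*j^13*s^2 + 27884544*j^13*s^3 + 307200*j^13*s^4 + 19980383744*j^13*p + 13544849920*j^13*p*s + 2422163968*j^13*p*s^2 + 132342272*j^13*p*s^3 + 1712128*j^13*p*s^4 + 15428938240*j^13*p^2 + 15792603648*j^13*p^2*s + 3836890112*j^13*p^2*s^2 + 262801920*j^13*p^2*s^3 + 4054016*j^13*p^2*s^4 + 6019328512*j^13*p^3 + 9593590784*j^13*p^3*s + 3244710912*j^13*p^3*s^2 + 284099584*j^13*p^3*s^3 + 5307392*j^13*p^3*s^4 + 1244154368*j^13*p^4 + 3299469312*j^13*p^4*s + 1601436672*j^13*p^4*s^2 + 182378496*j^13*p^4*s^3 + 4186112*j^13*p^4*s^4 + 127756288*j^13*p^5 + 646564352*j^13*p^5*s + 471472640*j^13*p^5*s^2 + 71105024*j^13*p^5*s^3 + 2029568*j^13*p^5*s^4 + 4988928*j^13*p^6 + 67940864*j^13*p^6*s + 80366592*j^13*p^6*s^2 + 16431616*j^13*p^6*s^3 + 588800*j^13*p^6*s^4 + 3219456*j^13*p^7*s + 7147520*j^13*p^7*s^2 + 2056192*j^13*p^7*s^3 + 93184*j^13*p^7*s^4 + 40960*j^13*p^8*s + 245760*j^13*p^8*s^2 + 106496*j^13*p^8*s^3 + 6144*j^13*p^8*s^4 + 2209739776*j^14 + 791695360*j^14*s + 78880768*j^14*s^2 + 2285568*j^14*s^3 + 12288*j^14*s^4 + 3723190272*j^14*p + 2124645376*j^14*p*s + 286194688*j^14*p*s^2 + 10297344*j^14*p*s^3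 + 65536*j^14*p*s^4 + 2364552192*j^14*p^2 + 2201477120*j^14*p^2*s + 416163840*j^14*p^2*s^2 + 19073024*j^14*p^2*s^3 + 146432*j^14*p^2*s^4 + 708322304*j^14*p^3 + 1146394624*j^14*p^3*s + 313421824*j^14*p^3*s^2 + 18741248*j^14*p^3*s^3 + 177152*j^14*p^3*s^4 + 99702784*j^14*p^4 + 322981888*j^14*p^4*s + 132179968*j^14*p^4*s^2 + 10514432*j^14*p^4*s^3 + 124928*j^14*p^4*s^4 + 5225472*j^14*p^5 + 48489472*j^14*p^5*s + 31245312*j^14*p^5*s^2 + 3362816*j^14*p^5*s^3 + 51200*j^14*p^5*s^4 + 3457024*j^14*p^6*s + 3821568*j^14*p^6*s^2 + 567296*j^14*p^6*s^3 + 11264*j^14*p^6*s^4 + 81920*j^14*p^7*s + 184320*j^14*p^7*s^2 + 38912*j^14*p^7*s^3 + 1024*j^14*p^7*s^4 + 350580736*j^15 + 93474816*j^15*s + 6090752*j^15*s^2 + 86016*j^15*s^3 + 496508928*j^15*p + 228292608*j^15*p*s + 20647936*j^15*p*s^2 + 366592*j^15*p*s^3 + 245356544*j^15*p^2 + 206600192*j^15*p^2*s + 27287552*j^15*p^2*s^2 + 628736*j^15*p^2*s^3 + 50483200*j^15*p^3 + 89507840*j^15*p^3*s + 17924096*j^15*p^3*s^2 + 552960*j^15*p^3*s^3 + 3647488*j^15*p^4 + 19740672*j^15*p^4*s + 6197248*j^15*p^4*s^2 + 262144*j^15*p^4*s^3 + 2097152*j^15*p^5*s + 1077248*j^15*p^5*s^2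 + 63488*j^15*p^5*s^3 + 81920*j^15*p^6*s + 73728*j^15*p^6*s^2 + 6144*j^15*p^6*s^3 + 38469632*j^16 + 6799360*j^16*s + 217088*j^16*s^2 + 44093440*j^16*p + 14974976*j^16*p*s + 684032*j^16*p*s^2 + 15286272*j^16*p^2 + 11558912*j^16*p^2*s + 811008*j^16*p^2*s^2 + 1634304*j^16*p^3 + 3989504*j^16*p^3*s + 450560*j^16*p^3*s^2 + 647168*j^16*p^4*s + 118784*j^16*p^4*s^2 + 40960*j^16*p^5*s + 12288*j^16*p^5*s^2 + 2605056*j^17 + 229376*j^17*s + 2277376*j^17*p + 450560*j^17*p*s + 425984*j^17*p^2 + 286720*j^17*p^2*s + 73728*j^17*p^3*s + 8192*j^17*p^4*s + 81920*j^18 + 49152*j^18*p"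
    unfolding Nh_def LN_def LD_def Aa_def Bb_def Cc_def by algebra
  have "0 < 179403984 + 491217696*s + 507337344*s^2 + 217230336*s^3 + 26873856*s^4 + 1069329276*p + 3312645984*p*s + 3851779392*p*s^2 + 1827608832*p*s^3 + 239625216*p*s^4 + 2944687608*p^2 + 10288575288*p^2*s + 13498459488*p^2*s^2 + 7122784896*p^2*s^3 + 988360704*p^2*s^4 + 4968523800*p^3 + 19539094104*p^3*s + 29007336816*p^3*s^2 + 17090491968*p^3*s^3 + 2505364992*p^3*s^4 + 5741230104*p^4 + 25392564072*p^4*s + 42814519488*p^4*s^2 + 28296206496*p^4*s^3 + 4373367552*p^4*s^4 + 4807909332*p^5 + 23934129480*p^5*s + 46057029552*p^5*s^2 + 34331685408*p^5*s^3 + 5582025792*p^5*s^4 + 3009997872*p^6 + 16910930352*p^6*s + 37378062272*p^6*s^2 + 31631381472*p^6*s^3 + 5397693696*p^6*s^4 + 1431399696*p^7 + 9124048304*p^7*s + 23359186976*p^7*s^2 + 22620629536*p^7*s^3 + 4041522816*p^7*s^4 + 519652928*p^8 + 3791052912*p^8*s + 11367516800*p^8*s^2 + 12720045376*p^8*s^3 + 2373720064*p^8*s^4 + 143331364*p^9 + 1213303664*p^9*s + 4324406560*p^9*s^2 + 5659913024*p^9*s^3 + 1100552128*p^9*s^4 + 29567768*p^10 + 296692376*p^10*s + 1282402912*p^10*s^2 + 1993949248*p^10*s^3 + 403046912*p^10*s^4 + 4423640*p^11 + 54439608*p^11*s + 293485360*p^11*s^2 + 553291904*p^11*s^3 + 115996928*p^11*s^4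 + 453720*p^12 + 7255176*p^12*s + 50838080*p^12*s^2 + 119505696*p^12*s^3 + 25928448*p^12*s^4 + 28556*p^13 + 662888*p^13*s + 6446576*p^13*s^2 + 19678880*p^13*s^3 + 4409280*p^13*s^4 + 832*p^14 + 37120*p^14*s + 564608*p^14*s^2 + 2386784*p^14*s^3 + 551168*p^14*s^4 + 960*p^15*s + 30528*p^15*s^2 + 200992*p^15*s^3 + 47744*p^15*s^4 + 768*p^16*s^2 + 10496*p^16*s^3 + 2560*p^16*s^4 + 256*p^17*s^3 + 64*p^17*s^4 + 2488488156*j + 5922812016*j*s + 5247649152*j*s^2 + 1897406208*j*s^3 + 203793408*j*s^4 + 13932092988*j*p + 37694384856*j*p*s + 37806323616*j*p*s^2 + 15210695808*j*p*s^3 + 1745307648*j*p*s^4 + 35883485676*j*p^2 + 109848870792*j*p^2*s + 125034754896*j*p^2*s^2 + 56195052480*j*p^2*s^3 + 6880453632*j*p^2*s^4 + 56362709844*j*p^3 + 194487442920*j*p^3*s + 252033093360*j*p^3*s^2 + 127095016032*j*p^3*s^3 + 16579033344*j*p^3*s^4 + 60311125008*j*p^4 + 233915664648*j*p^4*s + 346564068864*j*p^4*s^2 + 197113304736*j*p^4*s^3 + 27341088192*j*p^4*s^4 + 46493343912*j*p^5 + 202315223216*j*p^5*s + 344629257376*j*p^5*s^2 + 222467274144*j*p^5*s^3 + 32739356736*j*p^5*s^4 + 26611184296*j*p^6 + 129841915344*j*p^6*s + 256214997088*j*p^6*s^2 + 189161282976*j*p^6*s^3 + 29463819456*j*p^6*s^4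 + 11477057848*j*p^7 + 62843950480*j*p^7*s + 145111871392*j*p^7*s^2 + 123703676864*j*p^7*s^3 + 20341682368*j*p^7*s^4 + 3742649164*j*p^8 + 23059785792*j*p^8*s + 63165203648*j*p^8*s^2 + 62925528640*j*p^8*s^3 + 10895473920*j*p^8*s^4 + 916422620*j*p^9 + 6385644920*j*p^9*s + 21143699616*j*p^9*s^2 + 24998149056*j*p^9*s^3 + 4545728128*j*p^9*s^4 + 165366380*j*p^10 + 1313923048*j*p^10*s + 5401163344*j*p^10*s^2 + 7734945536*j*p^10*s^3 + 1473330560*j*p^10*s^4 + 21230580*j*p^11 + 194829064*j*p^11*s + 1034541552*j*p^11*s^2 + 1845605344*j*p^11*s^3 + 367300224*j*p^11*s^4 + 1820872*j*p^12 + 19681992*j*p^12*s + 143895360*j*p^12*s^2 + 333084448*j*p^12*s^3 + 69087168*j*p^12*s^4 + 92352*j*p^13 + 1212544*j*p^13*s + 13727136*j*p^13*s^2 + 43975712*j*p^13*s^3 + 9483584*j*p^13*s^4 + 2048*j*p^14 + 34368*j*p^14*s + 803456*j*p^14*s^2 + 4007328*j*p^14*s^3 + 896448*j*p^14*s^4 + 21760*j*p^15*s^2 + 225280*j*p^15*s^3 + 52160*j*p^15*s^4 + 5888*j*p^16*s^3 + 1408*j*p^16*s^4 + 15787979892*j^2 + 32957128368*j^2*s + 25261450560*j^2*s^2 + 7831489536*j^2*s^3 + 736791552*j^2*s^4 + 82673848692*j^2*p + 197877846672*j^2*p*s + 172913066064*j^2*p*s^2 + 59968247616*j^2*p*s^3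 + 6074797824*j^2*p*s^4 + 198103160052*j^2*p^2 + 540735776568*j^2*p^2*s + 540311435280*j^2*p^2*s^2 + 210533922144*j^2*p^2*s^3 + 22947473664*j^2*p^2*s^4 + 287735074188*j^2*p^3 + 891734545032*j^2*p^3*s + 1022749857888*j^2*p^3*s^2 + 449948754144*j^2*p^3*s^3 + 52703524800*j^2*p^3*s^4 + 282706271144*j^2*p^4 + 991383289664*j^2*p^4*s + 1311727559840*j^2*p^4*s^2 + 655362399168*j^2*p^4*s^3 + 82353405888*j^2*p^4*s^4 + 198438741576*j^2*p^5 + 785565434816*j^2*p^5*s + 1207306616224*j^2*p^5*s^2 + 689907628992*j^2*p^5*s^3 + 92813859072*j^2*p^5*s^4 + 102368686024*j^2*p^6 + 457004179184*j^2*p^6*s + 823401111712*j^2*p^6*s^2 + 542965063616*j^2*p^6*s^3 + 78018468288*j^2*p^6*s^4 + 39285946072*j^2*p^7 + 197903342928*j^2*p^7*s + 423339493184*j^2*p^7*s^2 + 325765607104*j^2*p^7*s^3 + 49870307392*j^2*p^7*s^4 + 11210570276*j^2*p^8 + 63909487024*j^2*p^8*s + 165168015744*j^2*p^8*s^2 + 150469786624*j^2*p^8*s^3 + 24477582720*j^2*p^8*s^4 + 2347598916*j^2*p^9 + 15241980752*j^2*p^9*s + 48779295504*j^2*p^9*s^2 + 53611352128*j^2*p^9*s^3 + 9243286784*j^2*p^9*s^4 + 350296388*j^2*p^10 + 2621941400*j^2*p^10*s + 10773118544*j^2*p^10*s^2 + 14652396384*j^2*p^10*s^3 + 2670703232*j^2*p^10*s^4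 + 35218012*j^2*p^11 + 311174760*j^2*p^11*s + 1736205024*j^2*p^11*s^2 + 3028634592*j^2*p^11*s^3 + 582200896*j^2*p^11*s^4 + 2133952*j^2*p^12 + 23454624*j^2*p^12*s + 195508256*j^2*p^12*s^2 + 461410112*j^2*p^12*s^3 + 93347008*j^2*p^12*s^4 + 58688*j^2*p^13 + 944160*j^2*p^13*s + 14230400*j^2*p^13*s^2 + 49588672*j^2*p^13*s^3 + 10540800*j^2*p^13*s^4 + 12288*j^2*p^14*s + 572800*j^2*p^14*s^2 + 3480704*j^2*p^14*s^3 + 776896*j^2*p^14*s^4 + 8448*j^2*p^15*s^2 + 137088*j^2*p^15*s^3 + 32192*j^2*p^15*s^4 + 2048*j^2*p^16*s^3 + 512*j^2*p^16*s^4 + 61307991504*j^3 + 112826242656*j^3*s + 75295544112*j^3*s^2 + 20210751936*j^3*s^3 + 1673581824*j^3*s^4 + 299476772856*j^3*p + 638985566808*j^3*p*s + 490137423408*j^3*p*s^2 + 148080229920*j^3*p*s^3 + 13305876480*j^3*p*s^4 + 665429580864*j^3*p^2 + 1636602246648*j^3*p^2*s + 1448111085696*j^3*p^2*s^2 + 494814530592*j^3*p^2*s^3 + 48239337024*j^3*p^2*s^4 + 890097745728*j^3*p^3 + 2511895149408*j^3*p^3*s + 2575422598304*j^3*p^3*s^2 + 1000728886848*j^3*p^3*s^3 + 105765287616*j^3*p^3*s^4 + 798945925120*j^3*p^4 + 2578321771168*j^3*p^4*s + 3081716259296*j^3*p^4*s^2 + 1370581430720*j^3*p^4*s^3 + 156821116800*j^3*p^4*s^4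 + 507405341136*j^3*p^5 + 1868693029168*j^3*p^5*s + 2625281704864*j^3*p^5*s^2 + 1347140218944*j^3*p^5*s^3 + 166565159552*j^3*p^5*s^4 + 234040952480*j^3*p^6 + 983200823024*j^3*p^6*s + 1641963639616*j^3*p^6*s^2 + 982027119680*j^3*p^6*s^3 + 130921505408*j^3*p^6*s^4 + 79109564192*j^3*p^7 + 379734270272*j^3*p^7*s + 765694958848*j^3*p^7*s^2 + 540738853888*j^3*p^7*s^3 + 77541265024*j^3*p^7*s^4 + 19493299120*j^3*p^8 + 107429115296*j^3*p^8*s + 267333725232*j^3*p^8*s^2 + 226743705536*j^3*p^8*s^3 + 34883766016*j^3*p^8*s^4 + 3429583480*j^3*p^9 + 21913466552*j^3*p^9*s + 69454019120*j^3*p^9*s^2 + 72374722592*j^3*p^9*s^3 + 11914808832*j^3*p^9*s^4 + 412847008*j^3*p^10 + 3115993432*j^3*p^10*s + 13191088320*j^3*p^10*s^2 + 17426076448*j^3*p^10*s^3 + 3061985856*j^3*p^10*s^4 + 31338848*j^3*p^11 + 289934112*j^3*p^11*s + 1770484192*j^3*p^11*s^2 + 3103381184*j^3*p^11*s^3 + 580624576*j^3*p^11*s^4 + 1262592*j^3*p^12 + 15577888*j^3*p^12*s + 157975104*j^3*p^12*s^2 + 394712000*j^3*p^12*s^3 + 78462592*j^3*p^12*s^4 + 16384*j^3*p^13 + 353792*j^3*p^13*s + 8321152*j^3*p^13*s^2 + 33712256*j^3*p^13*s^3 + 7107968*j^3*p^13*s^4 + 192512*j^3*p^14*s^2 + 1717632*j^3*p^14*s^3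 + 383744*j^3*p^14*s^4 + 38912*j^3*p^15*s^3 + 9216*j^3*p^15*s^4 + 163924692192*j^4 + 266758457184*j^4*s + 155681535312*j^4*s^2 + 36390404736*j^4*s^3 + 2656634112*j^4*s^4 + 745328568528*j^4*p + 1424699538384*j^4*p*s + 964385312496*j^4*p*s^2 + 255435410304*j^4*p*s^3 + 20391899904*j^4*p*s^4 + 1531508575488*j^4*p^2 + 3417806591360*j^4*p^2*s + 2694948723040*j^4*p^2*s^2 + 813239890272*j^4*p^2*s^3 + 71030889792*j^4*p^2*s^4 + 1880221650400*j^4*p^3 + 4876742252992*j^4*p^3*s + 4503130611776*j^4*p^3*s^2 + 1557591123744*j^4*p^3*s^3 + 148810897536*j^4*p^3*s^4 + 1535191931680*j^4*p^4 + 4614084496800*j^4*p^4*s + 5025187577888*j^4*p^4*s^2 + 2006751791232*j^4*p^4*s^3 + 209520384128*j^4*p^4*s^4 + 877358270688*j^4*p^5 + 3051733744576*j^4*p^5*s + 3958774216032*j^4*p^5*s^2 + 1841640202624*j^4*p^5*s^3 + 209812254144*j^4*p^5*s^4 + 359289873056*j^4*p^6 + 1447489501280*j^4*p^6*s + 2267196608960*j^4*p^6*s^2 + 1242879547968*j^4*p^6*s^3 + 154203731840*j^4*p^6*s^4 + 105970376768*j^4*p^7 + 496319617312*j^4*p^7*s + 956690248960*j^4*p^7*s^2 + 627365673152*j^4*p^7*s^3 + 84574520832*j^4*p^7*s^4 + 22258958080*j^4*p^8 + 122179880064*j^4*p^8*s + 297821942416*j^4*p^8*s^2 + 238328982272*j^4*p^8*s^3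 + 34824649984*j^4*p^8*s^4 + 3228634192*j^4*p^9 + 21094567024*j^4*p^9*s + 67686394928*j^4*p^9*s^2 + 67922387200*j^4*p^9*s^3 + 10730775424*j^4*p^9*s^4 + 304111200*j^4*p^10 + 2436847520*j^4*p^10*s + 10956933728*j^4*p^10*s^2 + 14330680160*j^4*p^10*s^3 + 2441996096*j^4*p^10*s^4 + 16429024*j^4*p^11 + 172121376*j^4*p^11*s + 1206605888*j^4*p^11*s^2 + 2180160800*j^4*p^11*s^3 + 399837568*j^4*p^11*s^4 + 372480*j^4*p^12 + 6127872*j^4*p^12*s + 83025536*j^4*p^12*s^2 + 228248320*j^4*p^12*s^3 + 44978048*j^4*p^12*s^4 + 60416*j^4*p^13*s + 2990592*j^4*p^13*s^2 + 15113472*j^4*p^13*s^3 + 3198400*j^4*p^13*s^4 + 33792*j^4*p^14*s^2 + 532480*j^4*p^14*s^3 + 121344*j^4*p^14*s^4 + 6144*j^4*p^15*s^3 + 1536*j^4*p^15*s^4 + 321199914336*j^5 + 462881323392*j^5*s + 236800197888*j^5*s^2 + 48321261504*j^5*s^3 + 3105983232*j^5*s^4 + 1356343378928*j^5*p + 2330197546688*j^5*p*s + 1396443185792*j^5*p*s^2 + 325229105952*j^5*p*s^3 + 23037378048*j^5*p*s^4 + 2570103252112*j^5*p^2 + 5230523631872*j^5*p^2*s + 3690803161024*j^5*p^2*s^2 + 987114744480*j^5*p^2*s^3 + 77154310080*j^5*p^2*s^4 + 2885660230096*j^5*p^3 + 6927165678496*j^5*p^3*s + 5791322956352*j^5*p^3*s^2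 + 1790794958720*j^5*p^3*s^3 + 154522286784*j^5*p^3*s^4 + 2133521448976*j^5*p^4 + 6027480836512*j^5*p^4*s + 6020680593600*j^5*p^4*s^2 + 2169777362688*j^5*p^4*s^3 + 206614058624*j^5*p^4*s^4 + 1090767420784*j^5*p^5 + 3626363840160*j^5*p^5*s + 4378476799424*j^5*p^5*s^2 + 1857606600896*j^5*p^5*s^3 + 194999065344*j^5*p^5*s^4 + 393506876976*j^5*p^6 + 1543732239648*j^5*p^6*s + 2290093718592*j^5*p^6*s^2 + 1158767811776*j^5*p^6*s^3 + 133875802240*j^5*p^6*s^4 + 100203018224*j^5*p^7 + 466953174496*j^5*p^7*s + 871065741888*j^5*p^7*s^2 + 534811082112*j^5*p^7*s^3 + 67867156608*j^5*p^7*s^4 + 17670987088*j^5*p^8 + 99090303328*j^5*p^8*s + 240407839808*j^5*p^8*s^2 + 183344193856*j^5*p^8*s^3 + 25498382592*j^5*p^8*s^4 + 2064319456*j^5*p^9 + 14268340256*j^5*p^9*s + 47383687360*j^5*p^9*s^2 + 46380009760*j^5*p^9*s^3 + 7052922624*j^5*p^9*s^4 + 146134656*j^5*p^10 + 1305350496*j^5*p^10*s + 6447196928*j^5*p^10*s^2 + 8497725344*j^5*p^10*s^3 + 1409891776*j^5*p^10*s^4 + 5160192*j^5*p^11 + 66455808*j^5*p^11*s + 568385152*j^5*p^11*s^2 + 1088403968*j^5*p^11*s^3 + 196655808*j^5*p^11*s^4 + 49152*j^5*p^12 + 1350656*j^5*p^12*s + 28653312*j^5*p^12*s^2 + 91416832*j^5*p^12*s^3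 + 17965952*j^5*p^12*s^4 + 605184*j^5*p^13*s^2 + 4447232*j^5*p^13*s^3 + 950784*j^5*p^13*s^4 + 92160*j^5*p^14*s^3 + 21504*j^5*p^14*s^4 + 478622545632*j^6 + 610847650752*j^6*s + 274002725376*j^6*s^2 + 48779751936*j^6*s^3 + 2748586752*j^6*s^4 + 1872210655776*j^6*p + 2896249303424*j^6*p*s + 1538366603136*j^6*p*s^2 + 314976232960*j^6*p*s^3 + 19710716928*j^6*p*s^4 + 3260674125600*j^6*p^2 + 6073994369536*j^6*p^2*s + 3843815434496*j^6*p^2*s^2 + 911508311936*j^6*p^2*s^3 + 63491505088*j^6*p^2*s^4 + 3334048531776*j^6*p^3 + 7449827954688*j^6*p^3*s + 5657876064384*j^6*p^3*s^2 + 1565774179968*j^6*p^3*s^3 + 121559559232*j^6*p^3*s^4 + 2220038730464*j^6*p^4 + 5942863464576*j^6*p^4*s + 5469909198976*j^6*p^4*s^2 + 1782386026240*j^6*p^4*s^3 + 154286259968*j^6*p^4*s^4 + 1008153420928*j^6*p^5 + 3238473406464*j^6*p^5*s + 3662429092224*j^6*p^5*s^2 + 1421026828032*j^6*p^5*s^3 + 137082298624*j^6*p^5*s^4 + 317356392032*j^6*p^6 + 1229941083392*j^6*p^6*s + 1742747757184*j^6*p^6*s^2 + 817081740800*j^6*p^6*s^3 + 87739593344*j^6*p^6*s^4 + 68843433920*j^6*p^7 + 325424082688*j^6*p^7*s + 594241807744*j^6*p^7*s^2 + 343409200128*j^6*p^7*s^3 + 40982038912*j^6*p^7*s^4 + 9993149632*j^6*p^8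 + 58777508288*j^6*p^8*s + 144246062464*j^6*p^8*s^2 + 105614646016*j^6*p^8*s^3 + 13981498368*j^6*p^8*s^4 + 910425184*j^6*p^9 + 6916102784*j^6*p^9*s + 24359983360*j^6*p^9*s^2 + 23511232256*j^6*p^9*s^3 + 3446181632*j^6*p^9*s^4 + 45555712*j^6*p^10 + 482960128*j^6*p^10*s + 2732300928*j^6*p^10*s^2 + 3692808832*j^6*p^10*s^3 + 598323136*j^6*p^10*s^4 + 891904*j^6*p^11 + 16325888*j^6*p^11*s + 186249216*j^6*p^11*s^2 + 390149504*j^6*p^11*s^3 + 69803072*j^6*p^11*s^4 + 139264*j^6*p^12*s + 6382080*j^6*p^12*s^2 + 25371648*j^6*p^12*s^3 + 5014528*j^6*p^12*s^4 + 61440*j^6*p^13*s^2 + 842752*j^6*p^13*s^3 + 184832*j^6*p^13*s^4 + 8192*j^6*p^14*s^3 + 2048*j^6*p^14*s^4 + 555000261184*j^7 + 626385405952*j^7*s + 245855619328*j^7*s^2 + 38037709056*j^7*s^3 + 1863929856*j^7*s^4 + 2004639957920*j^7*p + 2793989401664*j^7*p*s + 1313858333632*j^7*p*s^2 + 235680425344*j^7*p*s^3 + 12927047680*j^7*p*s^4 + 3195719390592*j^7*p^2 + 5463373932224*j^7*p^2*s + 3100769410752*j^7*p^2*s^2 + 650103792768*j^7*p^2*s^3 + 40047633408*j^7*p^2*s^4 + 2960034395872*j^7*p^3 + 6187133162304*j^7*p^3*s + 4274316033344*j^7*p^3*s^2 + 1056404832000*j^7*p^3*s^3 + 73260253696*j^7*p^3*s^4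 + 1762911593664*j^7*p^4 + 4506101303232*j^7*p^4*s + 3832827339200*j^7*p^4*s^2 + 1127803279616*j^7*p^4*s^3 + 88159445504*j^7*p^4*s^4 + 704648687584*j^7*p^5 + 2211471420352*j^7*p^5*s + 2353857534144*j^7*p^5*s^2 + 834957101568*j^7*p^5*s^3 + 73588998656*j^7*p^5*s^4 + 191162170624*j^7*p^6 + 743425526080*j^7*p^6*s + 1013592651072*j^7*p^6*s^2 + 440679756800*j^7*p^6*s^3 + 43768218112*j^7*p^6*s^4 + 34705846048*j^7*p^7 + 170114072000*j^7*p^7*s + 307492462016*j^7*p^7*s^2 + 167644354816*j^7*p^7*s^3 + 18744008192*j^7*p^7*s^4 + 4035426432*j^7*p^8 + 25704627008*j^7*p^8*s + 64926683200*j^7*p^8*s^2 + 45855431168*j^7*p^8*s^3 + 5764384256*j^7*p^8*s^4 + 273597056*j^7*p^9 + 2401394432*j^7*p^9*s + 9236920960*j^7*p^9*s^2 + 8870598784*j^7*p^9*s^3 + 1252232704*j^7*p^9*s^4 + 8755712*j^7*p^10 + 120980736*j^7*p^10*s + 830134528*j^7*p^10*s^2 + 1171672960*j^7*p^10*s^3 + 185602560*j^7*p^10*s^4 + 65536*j^7*p^11 + 2324480*j^7*p^11*s + 41379328*j^7*p^11*s^2 + 98926592*j^7*p^11*s^3 + 17590272*j^7*p^11*s^4 + 825344*j^7*p^12*s^2 + 4686848*j^7*p^12*s^3 + 937984*j^7*p^12*s^4 + 90112*j^7*p^13*s^3 + 20480*j^7*p^13*s^4 + 507918863808*j^8 + 505284170624*j^8*s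 + 172715310976*j^8*s^2 + 23048346624*j^8*s^3 + 970014720*j^8*s^4 + 1687217398272*j^8*p + 2116929425792*j^8*p*s + 878033911040*j^8*p*s^2 + 137008517120*j^8*p*s^3 + 6505652224*j^8*p*s^4 + 2448998025152*j^8*p^2 + 3849005379456*j^8*p^2*s + 1954511367424*j^8*p^2*s^2 + 359946865408*j^8*p^2*s^3 + 19373549568*j^8*p^2*s^4 + 2040765471424*j^8*p^3 + 4008693074816*j^8*p^3*s + 2517033201664*j^8*p^3*s^2 + 552392979200*j^8*p^3*s^3 + 33823459328*j^8*p^3*s^4 + 1077337454656*j^8*p^4 + 2650872854784*j^8*p^4*s + 2085849210880*j^8*p^4*s^2 + 551538086144*j^8*p^4*s^3 + 38511222272*j^8*p^4*s^4 + 374467227456*j^8*p^5 + 1162885053952*j^8*p^5*s + 1168840779776*j^8*p^5*s^2 + 377568986368*j^8*p^5*s^3 + 30101193216*j^8*p^5*s^4 + 86089041984*j^8*p^6 + 342409644928*j^8*p^6*s + 452144879872*j^8*p^6*s^2 + 181790235392*j^8*p^6*s^3 + 16552820224*j^8*p^6*s^4 + 12761590848*j^8*p^7 + 66735101312*j^8*p^7*s + 120771621888*j^8*p^7*s^2 + 62046406400*j^8*p^7*s^3 + 6451066368*j^8*p^7*s^4 + 1142429184*j^8*p^8 + 8237290624*j^8*p^8*s + 21843580032*j^8*p^8*s^2 + 14903176960*j^8*p^8*s^3 + 1768649216*j^8*p^8*s^4 + 53529536*j^8*p^9 + 585978752*j^8*p^9*s + 2555389696*j^8*p^9*s^2 +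 2458507008*j^8*p^9*s^3 + 333009408*j^8*p^9*s^4 + 905216*j^8*p^10 + 19444736*j^8*p^10*s + 176375296*j^8*p^10*s^2 + 265170432*j^8*p^10*s^3 + 41034240*j^8*p^10*s^4 + 150528*j^8*p^11*s + 5869568*j^8*p^11*s^2 + 17009152*j^8*p^11*s^3 + 3017216*j^8*p^11*s^4 + 49152*j^8*p^12*s^2 + 528384*j^8*p^12*s^3 + 108544*j^8*p^12*s^4 + 4096*j^8*p^13*s^3 + 1024*j^8*p^13*s^4 + 369681257920*j^9 + 322391282688*j^9*s + 95204046080*j^9*s^2 + 10826697216*j^9*s^3 + 384141312*j^9*s^4 + 1123608947328*j^9*p + 1265967026688*j^9*p*s + 459966686592*j^9*p*s^2 + 61710128896*j^9*p*s^3 + 2490187776*j^9*p*s^4 + 1474817201920*j^9*p^2 + 2132566728704*j^9*p^2*s + 963781394176*j^9*p^2*s^2 + 154198443776*j^9*p^2*s^3 + 7120626176*j^9*p^2*s^4 + 1095648079680*j^9*p^3 + 2031919278208*j^9*p^3*s + 1155643492992*j^9*p^3*s^2 + 222922661120*j^9*p^3*s^3 + 11840904704*j^9*p^3*s^4 + 506496121664*j^9*p^4 + 1211204108672*j^9*p^4*s + 880615166976*j^9*p^4*s^2 + 207315176704*j^9*p^4*s^3 + 12714574336*j^9*p^4*s^4 + 150564021504*j^9*p^5 + 470207719168*j^9*p^5*s + 447063876224*j^9*p^5*s^2 + 130424022784*j^9*p^5*s^3 + 9258174976*j^9*p^5*s^4 + 28641800832*j^9*p^6 + 119568026368*j^9*p^6*s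 + 153792668416*j^9*p^6*s^2 + 56769303296*j^9*p^6*s^3 + 4670670336*j^9*p^6*s^4 + 3342168384*j^9*p^7 + 19435623040*j^9*p^7*s + 35643622784*j^9*p^7*s^2 + 17155796736*j^9*p^7*s^3 + 1637297664*j^9*p^7*s^4 + 216321408*j^9*p^8 + 1893878656*j^9*p^8*s + 5401041152*j^9*p^8*s^2 + 3548583168*j^9*p^8*s^3 + 393172480*j^9*p^8*s^4 + 6127616*j^9*p^9 + 96148480*j^9*p^9*s + 500951040*j^9*p^9*s^2 + 484410880*j^9*p^9*s^3 + 62410240*j^9*p^9*s^4 + 32768*j^9*p^10 + 1770496*j^9*p^10*s + 24771584*j^9*p^10*s^2 + 40585728*j^9*p^10*s^3 + 6103040*j^9*p^10*s^4 + 458752*j^9*p^11*s^2 + 1798144*j^9*p^11*s^3 + 318464*j^9*p^11*s^4 + 28672*j^9*p^12*s^3 + 6144*j^9*p^12*s^4 + 214514571584*j^10 + 162635468288*j^10*s + 40988583936*j^10*s^2 + 3901022208*j^10*s^3 + 113534976*j^10*s^4 + 592680068928*j^10*p + 596951795200*j^10*p*s + 187936503296*j^10*p*s^2 + 21298646016*j^10*p*s^3 + 710680576*j^10*p*s^4 + 697161546304*j^10*p^2 + 927300724096*j^10*p^2*s + 369644974848*j^10*p^2*s^2 + 50513601024*j^10*p^2*s^3 + 1947822592*j^10*p^2*s^4 + 456111887680*j^10*p^3 + 802768772736*j^10*p^3*s + 410816485632*j^10*p^3*s^2 + 68544086528*j^10*p^3*s^3 + 3075755520*j^10*p^3*s^4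 + 181553731520*j^10*p^4 + 427223696640*j^10*p^4*s + 285902531072*j^10*p^4*s^2 + 59028046848*j^10*p^4*s^3 + 3099366912*j^10*p^4*s^4 + 45065554880*j^10*p^5 + 144817113856*j^10*p^5*s + 130206566400*j^10*p^5*s^2 + 33822124032*j^10*p^5*s^3 + 2086162944*j^10*p^5*s^4 + 6843376832*j^10*p^6 + 31191766400*j^10*p^6*s + 39268985600*j^10*p^6*s^2 + 13130809856*j^10*p^6*s^3 + 953952768*j^10*p^6*s^4 + 592503744*j^10*p^7 + 4104169088*j^10*p^7*s + 7730631936*j^10*p^7*s^2 + 3442661888*j^10*p^7*s^3 + 295185920*j^10*p^7*s^4 + 24731648*j^10*p^8 + 299860480*j^10*p^8*s + 948793344*j^10*p^8*s^2 + 593997824*j^10*p^8*s^3 + 60242432*j^10*p^8*s^4 + 310272*j^10*p^9 + 9730560*j^10*p^9*s + 65709056*j^10*p^9*s^2 + 63608832*j^10*p^9*s^3 + 7656960*j^10*p^9*s^4 + 65536*j^10*p^10*s + 2039808*j^10*p^10*s^2 + 3737600*j^10*p^10*s^3 + 537600*j^10*p^10*s^4 + 12288*j^10*p^11*s^2 + 88064*j^10*p^11*s^3 + 15360*j^10*p^11*s^4 + 99002591744*j^11 + 64469172736*j^11*s + 13620489472*j^11*s^2 + 1056267264*j^11*s^3 + 24195072*j^11*s^4 + 246577365248*j^11*p + 220430115200*j^11*p*s + 59154907648*j^11*p*s^2 + 5515827712*j^11*p*s^3 + 146022400*j^11*p*s^4 + 256822672640*j^11*p^2 + 313852859264*j^11*p^2*s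 + 108815941888*j^11*p^2*s^2 + 12380849664*j^11*p^2*s^3 + 382606336*j^11*p^2*s^4 + 145485815040*j^11*p^3 + 244651609856*j^11*p^3*s + 111410892800*j^11*p^3*s^2 + 15690067968*j^11*p^3*s^3 + 571218944*j^11*p^3*s^4 + 48669215488*j^11*p^4 + 114764140800*j^11*p^4*s + 70156586752*j^11*p^4*s^2 + 12409796608*j^11*p^4*s^3 + 536340480*j^11*p^4*s^4 + 9727836672*j^11*p^5 + 33352105344*j^11*p^5*s + 28270242304*j^11*p^5*s^2 + 6392898048*j^11*p^5*s^3 + 329891840*j^11*p^5*s^4 + 1111621120*j^11*p^6 + 5921163136*j^11*p^6*s + 7321993984*j^11*p^6*s^2 + 2169191936*j^11*p^6*s^3 + 134208512*j^11*p^6*s^4 + 63924224*j^11*p^7 + 603408896*j^11*p^7*s + 1185371136*j^11*p^7*s^2 + 477576192*j^11*p^7*s^3 + 35544064*j^11*p^7*s^4 + 1300480*j^11*p^8 + 30411264*j^11*p^8*s + 111489024*j^11*p^8*s^2 + 65015808*j^11*p^8*s^3 + 5840896*j^11*p^8*s^4 + 507904*j^11*p^9*s + 5160960*j^11*p^9*s^2 + 4904960*j^11*p^9*s^3 + 534528*j^11*p^9*s^4 + 73728*j^11*p^10*s^2 + 153600*j^11*p^10*s^3 + 20480*j^11*p^10*s^4 + 36068685056*j^12 + 19825511424*j^12*s + 3420135680*j^12*s^2 + 207562752*j^12*s^3 + 3502080*j^12*s^4 + 80110430720*j^12*p + 62877260032*j^12*p*s + 14035468544*j^12*p*s^2 +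 1034618880*j^12*p*s^3 + 20336640*j^12*p*s^4 + 72679977984*j^12*p^2 + 81422070272*j^12*p^2*s + 24032025088*j^12*p^2*s^2 + 2189569536*j^12*p^2*s^3 + 50764800*j^12*p^2*s^4 + 34796148224*j^12*p^3 + 56474859520*j^12*p^3*s + 22483848704*j^12*p^3*s^2 + 2574148096*j^12*p^3*s^3 + 71239680*j^12*p^3*s^4 + 9429860096*j^12*p^4 + 22951956480*j^12*p^4*s + 12648026368*j^12*p^4*s^2 + 1848787968*j^12*p^4*s^3 + 61716480*j^12*p^4*s^4 + 1429522432*j^12*p^5 + 5575768320*j^12*p^5*s + 4421314816*j^12*p^5*s^2 + 840285184*j^12*p^5*s^3 + 34114560*j^12*p^5*s^4 + 109926400*j^12*p^6 + 784419328*j^12*p^6*s + 953127936*j^12*p^6*s^2 + 241468928*j^12*p^6*s^3 + 11996160*j^12*p^6*s^4 + 3176448*j^12*p^7 + 57789952*j^12*p^7*s + 120313856*j^12*p^7*s^2 + 42244608*j^12*p^7*s^3 + 2580480*j^12*p^7*s^4 + 1728512*j^12*p^8*s + 7815168*j^12*p^8*s^2 + 4071424*j^12*p^8*s^3 + 307200*j^12*p^8*s^4 + 8192*j^12*p^9*s + 184320*j^12*p^9*s^2 + 163840*j^12*p^9*s^3 + 15360*j^12*p^9*s^4 + 10231346176*j^13 + 4628169728*j^13*s + 626555904*j^13*s^2 + 27884544*j^13*s^3 + 307200*j^13*s^4 + 19980383744*j^13*p + 13544849920*j^13*p*s + 2422163968*j^13*p*s^2 + 132342272*j^13*p*s^3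 + 1712128*j^13*p*s^4 + 15428938240*j^13*p^2 + 15792603648*j^13*p^2*s + 3836890112*j^13*p^2*s^2 + 262801920*j^13*p^2*s^3 + 4054016*j^13*p^2*s^4 + 6019328512*j^13*p^3 + 9593590784*j^13*p^3*s + 3244710912*j^13*p^3*s^2 + 284099584*j^13*p^3*s^3 + 5307392*j^13*p^3*s^4 + 1244154368*j^13*p^4 + 3299469312*j^13*p^4*s + 1601436672*j^13*p^4*s^2 + 182378496*j^13*p^4*s^3 + 4186112*j^13*p^4*s^4 + 127756288*j^13*p^5 + 646564352*j^13*p^5*s + 471472640*j^13*p^5*s^2 + 71105024*j^13*p^5*s^3 + 2029568*j^13*p^5*s^4 + 4988928*j^13*p^6 + 67940864*j^13*p^6*s + 80366592*j^13*p^6*s^2 + 16431616*j^13*p^6*s^3 + 588800*j^13*p^6*s^4 + 3219456*j^13*p^7*s + 7147520*j^13*p^7*s^2 + 2056192*j^13*p^7*s^3 + 93184*j^13*p^7*s^4 + 40960*j^13*p^8*s + 245760*j^13*p^8*s^2 + 106496*j^13*p^8*s^3 + 6144*j^13*p^8*s^4 + 2209739776*j^14 + 791695360*j^14*s + 78880768*j^14*s^2 + 2285568*j^14*s^3 + 12288*j^14*s^4 + 3723190272*j^14*p + 2124645376*j^14*p*s + 286194688*j^14*p*s^2 + 10297344*j^14*p*s^3 + 65536*j^14*p*s^4 + 2364552192*j^14*p^2 + 2201477120*j^14*p^2*s + 416163840*j^14*p^2*s^2 + 19073024*j^14*p^2*s^3 + 146432*j^14*p^2*s^4 + 708322304*j^14*p^3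 + 1146394624*j^14*p^3*s + 313421824*j^14*p^3*s^2 + 18741248*j^14*p^3*s^3 + 177152*j^14*p^3*s^4 + 99702784*j^14*p^4 + 322981888*j^14*p^4*s + 132179968*j^14*p^4*s^2 + 10514432*j^14*p^4*s^3 + 124928*j^14*p^4*s^4 + 5225472*j^14*p^5 + 48489472*j^14*p^5*s + 31245312*j^14*p^5*s^2 + 3362816*j^14*p^5*s^3 + 51200*j^14*p^5*s^4 + 3457024*j^14*p^6*s + 3821568*j^14*p^6*s^2 + 567296*j^14*p^6*s^3 + 11264*j^14*p^6*s^4 + 81920*j^14*p^7*s + 184320*j^14*p^7*s^2 + 38912*j^14*p^7*s^3 + 1024*j^14*p^7*s^4 + 350580736*j^15 + 93474816*j^15*s + 6090752*j^15*s^2 + 86016*j^15*s^3 + 496508928*j^15*p + 228292608*j^15*p*s + 20647936*j^15*p*s^2 + 366592*j^15*p*s^3 + 245356544*j^15*p^2 + 206600192*j^15*p^2*s + 27287552*j^15*p^2*s^2 + 628736*j^15*p^2*s^3 + 50483200*j^15*p^3 + 89507840*j^15*p^3*s + 17924096*j^15*p^3*s^2 + 552960*j^15*p^3*s^3 + 3647488*j^15*p^4 + 19740672*j^15*p^4*s + 6197248*j^15*p^4*s^2 + 262144*j^15*p^4*s^3 + 2097152*j^15*p^5*s + 1077248*j^15*p^5*s^2 + 63488*j^15*p^5*s^3 + 81920*j^15*p^6*s + 73728*j^15*p^6*s^2 + 6144*j^15*p^6*s^3 + 38469632*j^16 + 6799360*j^16*s + 217088*j^16*s^2 + 44093440*j^16*p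 + 14974976*j^16*p*s + 684032*j^16*p*s^2 + 15286272*j^16*p^2 + 11558912*j^16*p^2*s + 811008*j^16*p^2*s^2 + 1634304*j^16*p^3 + 3989504*j^16*p^3*s + 450560*j^16*p^3*s^2 + 647168*j^16*p^4*s + 118784*j^16*p^4*s^2 + 40960*j^16*p^5*s + 12288*j^16*p^5*s^2 + 2605056*j^17 + 229376*j^17*s + 2277376*j^17*p + 450560*j^17*p*s + 425984*j^17*p^2 + 286720*j^17*p^2*s + 73728*j^17*p^3*s + 8192*j^17*p^4*s + 81920*j^18 + 49152*j^18*p" using assms
    by (intro add_pos_nonneg add_nonneg_nonneg mult_nonneg_nonneg zero_le_power; simp)
  then show ?thesis using e by simp
qed



lemma bm_pos: assumes "i \<le> m" shows "boros_moll i m > 0"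
proof -
  have "0 < (\<Sum>k=i..m. 2 ^ k * real ((2*m - 2*k) choose (m - k)) * real ((m + k) choose k) * real (k choose i))"
    by (rule sum_pos2[where i=m]) (use assms in auto)
  then show ?thesis unfolding boros_moll_def by simp
qed

lemma d0_step: "2*(real n+1) * boros_moll 0 (n+1) = (4*real n+3) * boros_moll 0 n"
proof (induction n)
  case 0
  have "boros_moll 0 1 = 3/2" by (simp add: boros_moll_def)
  moreover have "boros_moll 0 0 = 1" by (simp add: boros_moll_def)
  ultimately show ?case by simp
next
  case (Suc n)
  have r: "Cc 0 (real n) * boros_moll 0 (n+2) = Aa 0 (real n) * boros_moll 0 (n+1) - Bb 0 (real n) * boros_moll 0 n"
    using recur[of 0 n] by simp
  have nz: "(real n+1)*(real n+2) \<noteq> 0" by (simp add: add_nonneg_eq_0_iff)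
  have "(real n+1)*(real n+2) * (2*(real n+2) * boros_moll 0 (n+2)) = (real n+1)*(real n+2) * ((4*real n+7) * boros_moll 0 (n+1))"
    using r Suc.IH unfolding Cc_def Aa_def Bb_def by algebra
  then have "2*(real n+2) * boros_moll 0 (n+2) = (4*real n+7) * boros_moll 0 (n+1)" using nz by simp
  then show ?case by (simp add: numeral_eq_Suc algebra_simps)
qed

lemma part_b: assumes m: "1 \<le> m"
  shows "(boros_moll 0 m)^2 * ((boros_moll 0 m)^2 - boros_moll 0 (m-1) * boros_moll 0 (m+1))
      < (boros_moll 0 (m-1))^2 * ((boros_moll 0 (m+1))^2 - boros_moll 0 m * boros_moll 0 (m+2))"
proof -
  obtain n where mn: "m = n+1" using m by (metis add.commute le_Suc_ex)
  define a where "a = boros_moll 0 n"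
  define b where "b = boros_moll 0 (n+1)"
  define c where "c = boros_moll 0 (n+2)"
  define e where "e = boros_moll 0 (n+3)"
  have apos: "a > 0" unfolding a_def by (rule bm_pos) simp
  have hb: "2*(real n+1) * b = (4*real n+3) * a" unfolding a_def b_def by (rule d0_step)
  have hc: "2*(real n+2) * c = (4*real n+7) * b"
    using d0_step[of "n+1"] unfolding b_def c_def by (simp add: numeral_eq_Suc algebra_simps)
  have he: "2*(real n+3) * e = (4*real n+11) * c"
    using d0_step[of "n+2"] unfolding c_def e_def by (simp add: numeral_eq_Suc algebra_simps)
  define x where "x = (4*real n+3)/(2*(real n+1))"
  define y where "y = (4*real n+7)/(2*(real n+2))"
  define z where "z = (4*real n+11)/(2*(real n+3))"
  have bx: "b = x*a" using hb unfolding x_def by (simp add: field_simps add_nonneg_eq_0_iff)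
  have cy: "c = y*b" using hc unfolding y_def by (simp add: field_simps add_nonneg_eq_0_iff)
  have ez: "e = z*c" using he unfolding z_def by (simp add: field_simps add_nonneg_eq_0_iff)
  have xpos: "x > 0" unfolding x_def by (simp add: add_pos_pos)
  have key: "x*(x-y) < y*(y-z)"
  proof -
    define P1 where "P1 = 2*(real n+1)"
    define P2 where "P2 = 2*(real n+2)"
    define P3 where "P3 = 2*(real n+3)"
    have pp: "P1 > 0" "P2 > 0" "P3 > 0" unfolding P1_def P2_def P3_def by auto
    have hx: "x*P1 = 4*real n+3" unfolding x_def P1_def using pp by (simp add: P1_def)
    have hy: "y*P2 = 4*real n+7" unfolding y_def P2_def using pp by (simp add: P2_def)
    have hz: "z*P3 = 4*real n+11" unfolding z_def P3_def using pp by (simp add: P3_def)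
    have "(x*(x-y) - y*(y-z)) * (P1^2*P2^2*P3) = -(88 + 168*real n + 64*real n^2)"
      using hx hy hz unfolding P1_def P2_def P3_def by algebra
    moreover have "P1^2*P2^2*P3 > 0" using pp by simp
    moreover have "-(88 + 168*real n + 64*real n^2) < 0"
    proof -
      have "0 \<le> 64*real n^2" by simp
      then show ?thesis by linarith
    qed
    ultimately have wD: "(x*(x-y) - y*(y-z)) * (P1^2*P2^2*P3) < 0" "P1^2*P2^2*P3 > 0" by linarith+
    have "(x*(x-y) - y*(y-z)) < 0"
    proof (rule ccontr)
      assume "\<not> (x*(x-y) - y*(y-z)) < 0"
      then have "0 \<le> (x*(x-y) - y*(y-z)) * (P1^2*P2^2*P3)" using wD(2) by simp
      then show False using wD(1) by linarith
    qed
    then show ?thesis by simp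
  qed
  have "b^2*(b^2 - a*c) - a^2*(c^2 - b*e) = a^4*x^2*(x*(x-y) - y*(y-z))"
    unfolding ez cy bx by (simp add: algebra_simps power2_eq_square power4_eq_xxxx)
  moreover have "a^4*x^2*(x*(x-y) - y*(y-z)) < 0"
    using key apos xpos by (intro mult_pos_neg) auto
  ultimately have "b^2*(b^2 - a*c) < a^2*(c^2 - b*e)" by linarith
  then show ?thesis unfolding a_def b_def c_def e_def mn by (simp add: numeral_eq_Suc)
qed


definition Lf :: "real \<Rightarrow> real \<Rightarrow> real" where "Lf i m = LN i m / LD i m"

lemma LD_pos: fixes i m :: real assumes "1 \<le> i" "i + 1 \<le> m" shows "LD i m > 0"
  using assms unfolding LD_def by (intro mult_pos_pos) (auto intro: add_pos_pos)

lemma LN_pos: fixes i m :: real assumes "1 \<le> i" "i + 1 \<le> m" shows "LN i m > 0"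
proof -
  have p: "m - i \<ge> 1" using assms by simp
  have ii: "i*i \<ge> i" using mult_right_mono[of 1 i i] assms by simp
  have "2*m*(2*i*i+(m-i)) \<ge> 2*(2*i*i+(m-i))"
  proof -
    have "2*i*i + (m-i) \<ge> 0" using assms ii by simp
    moreover have "2*m \<ge> 2" using assms by simp
    ultimately show ?thesis using mult_right_mono[of 2 "2*m" "2*i*i+(m-i)"] by simp
  qed
  moreover have "2*(2*i*i+(m-i)) > (m-i)+2*i"
  proof -
    have e: "2*(2*i*i+(m-i)) = 4*(i*i) + 2*(m-i)" by (simp add: algebra_simps)
    have "4*(i*i) \<ge> 4*i" using ii by simp
    then show ?thesis unfolding e using p assms by (smt (verit))
  qed
  ultimately show ?thesis unfolding LN_def by linarith
qed

lemma base_ratio: "2*(real i+1) * boros_moll i (i+1) = (2*real i+1)*(2*real i+3) * boros_moll i i"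
proof -
  define c where "c = real ((2*i) choose i)"
  define g1 where "g1 = real ((2*i+1) choose i)"
  define g2 where "g2 = real ((2*i+2) choose (i+1))"
  have hg2: "g2 = 2*(2*real i+1)/(real i+1) * c" unfolding g2_def c_def by (rule B1)
  have hg1: "(real i+1)*g1 = (2*real i+1)*c"
  proof -
    have "(2*i+1 - i) * ((2*i+1) choose i) = (2*i+1) * ((2*i+1-1) choose i)" by (rule binomial_absorb_comp)
    moreover have "2*i+1-i = i+1" "2*i+1-1 = 2*i" by auto
    ultimately have "real (i+1) * g1 = real (2*i+1) * c" unfolding g1_def c_def by (metis of_nat_mult)
    then show ?thesis by (simp add: add.commute)
  qed
  have ni: "real i + 1 \<noteq> 0" by (simp add: add_nonneg_eq_0_iff)
  have hg2': "(real i+1)*g2 = 2*(2*real i+1)*c" using hg2 ni by (simp add: field_simps)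
  have d0: "boros_moll i i = 2^i * c / 4^i"
  proof -
    have "boros_moll i i = (\<Sum>k<i+1. tm i i k)" by (rule bm_tm) simp
    also have "\<dots> = (\<Sum>k<i. tm i i k) + tm i i i" by simp
    also have "(\<Sum>k<i. tm i i k) = 0" by (simp add: tm_def)
    also have "tm i i i = 2^i * c / 4^i"
    proof -
      have a: "i+i = 2*i" by simp
      show ?thesis unfolding tm_eq[OF order_refl] c_def a by simp
    qed
    finally show ?thesis by simp
  qed
  have d1: "boros_moll i (i+1) = 2^i * 2 * g1 / 4^(i+1) + 2^(i+1) * g2 * (real i + 1) / 4^(i+1)"
  proof -
    have "boros_moll i (i+1) = (\<Sum>k<i+2. tm i (i+1) k)" by (rule bm_tm) simp
    also have "\<dots> = (\<Sum>k<i. tm i (i+1) k) + tm i (i+1) i + tm i (i+1) (i+1)" by (simp add: numeral_eq_Suc)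
    also have "(\<Sum>k<i. tm i (i+1) k) = 0" by (simp add: tm_def)
    also have "tm i (i+1) i = 2^i * 2 * g1 / 4^(i+1)"
    proof -
      have le: "i \<le> i+1" by simp
      have a: "2*(i+1)-2*i = 2" "i+1-i = 1" "i+1+i = 2*i+1" by auto
      show ?thesis unfolding tm_eq[OF le] a g1_def by simp
    qed
    also have "tm i (i+1) (i+1) = 2^(i+1) * g2 * (real i + 1) / 4^(i+1)"
    proof -
      have le: "i+1 \<le> i+1" by simp
      have a: "2*(i+1)-2*(i+1) = 0" "i+1-(i+1) = 0" "i+1+(i+1) = 2*i+2" by auto
      have cc: "real ((i+1) choose i) = real i + 1" by simp
      show ?thesis unfolding tm_eq[OF le] a g2_def cc by simp
    qed
    finally show ?thesis by simp
  qed
  have p: "(4::real)^(i+1) = 4*4^i" "(2::real)^(i+1) = 2*2^i" by simp_all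
  have W: "(4::real)^i \<noteq> 0" by simp
  define T :: real where "T = 2^i"
  define V :: real where "V = 4^i"
  have V: "V \<noteq> 0" by (simp add: V_def)
  have "2*(real i+1) * boros_moll i (i+1) * (4*V) = 2*(real i+1) * (2*T * g1 + 2*T * g2 * (real i + 1))"
    unfolding d1 p T_def V_def by (simp add: field_simps)
  also have "\<dots> = (2*real i+1)*(2*real i+3) * (T * c) * 4"
    using hg1 hg2' by algebra
  also have "\<dots> = (2*real i+1)*(2*real i+3) * boros_moll i i * (4*V)"
    unfolding d0 T_def V_def by simp
  finally show ?thesis using V by simp
qed


lemma Cc_pos: fixes i m :: real assumes "1 \<le> i" "i + 1 \<le> m" shows "Cc i (m-1) > 0" "Cc i m > 0"
  using assms unfolding Cc_def by (auto intro!: mult_pos_pos)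

lemma Bb_pos: fixes i m :: real assumes "1 \<le> i" "i + 1 \<le> m" shows "Bb i (m-1) > 0"
  using assms unfolding Bb_def by (auto intro!: mult_pos_pos)

lemma LB: assumes i1: "1 \<le> i"
  shows "Lf (real i) (real (i+1+t)) * boros_moll i (i+t) \<le> boros_moll i (i+1+t)"
proof (induction t)
  case 0
  have dpos: "boros_moll i i > 0" by (rule bm_pos) simp
  have br: "2*(real i+1) * boros_moll i (i+1) = (2*real i+1)*(2*real i+3) * boros_moll i i" by (rule base_ratio)
  have ld: "LD (real i) (real i + 1) = 2*real i*real i + 1" unfolding LD_def by simp
  have ln: "LN (real i) (real i + 1) = 2*(real i+1)*(2*real i*real i+1) - (1+2*real i)" unfolding LN_def by simp
  have ldp: "2*real i*real i + 1 > 0" by (smt (verit) mult_nonneg_nonneg of_nat_0_le_iff)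
  have key: "2*(real i+1) * (LN (real i) (real i + 1) * boros_moll i i) \<le> 2*(real i+1) * (LD (real i) (real i + 1) * boros_moll i (i+1))"
  proof -
    have "2*(real i+1) * (LD (real i) (real i + 1) * boros_moll i (i+1)) - 2*(real i+1) * (LN (real i) (real i + 1) * boros_moll i i)
        = (2*real i*real i + 6*real i + 1) * boros_moll i i"
      unfolding ld ln using br by algebra
    moreover have "(2*real i*real i + 6*real i + 1) * boros_moll i i \<ge> 0" using dpos by (simp add: add_nonneg_nonneg)
    ultimately show ?thesis by linarith
  qed
  then have "LN (real i) (real i + 1) * boros_moll i i \<le> LD (real i) (real i + 1) * boros_moll i (i+1)"
    by (simp add: add_pos_nonneg)
  then have "LN (real i) (real i + 1) / LD (real i) (real i + 1) * boros_moll i i \<le> boros_moll i (i+1)"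
    using ldp ld by (simp add: field_simps)
  then show ?case by (simp add: Lf_def add.commute)
next
  case (Suc t)
  define ri where "ri = real i"
  define rm where "rm = real (i+1+t)"
  define a where "a = boros_moll i (i+t)"
  define b where "b = boros_moll i (i+1+t)"
  define c where "c = boros_moll i (i+2+t)"
  have ri1: "1 \<le> ri" using i1 by (simp add: ri_def)
  have rim: "ri + 1 \<le> rm" by (simp add: ri_def rm_def)
  have rim1: "ri + 1 \<le> rm + 1" using rim by simp
  have apos: "a > 0" unfolding a_def by (rule bm_pos) simp
  have bpos: "b > 0" unfolding b_def by (rule bm_pos) simp
  have rec: "Cc ri (rm-1) * c = Aa ri (rm-1) * b - Bb ri (rm-1) * a"
  proof -
    have "Cc (real i) (real (i+t)) * boros_moll i (i+t+2) = Aa (real i) (real (i+t)) * boros_moll i (i+t+1) - Bb (real i) (real (i+t)) * boros_moll i (i+t)"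
      by (rule recur) simp
    moreover have "real (i+t) = rm - 1" by (simp add: rm_def)
    moreover have "i+t+2 = i+2+t" "i+t+1 = i+1+t" by simp_all
    ultimately show ?thesis unfolding a_def b_def c_def ri_def by simp
  qed
  have IH: "LN ri rm * a \<le> LD ri rm * b"
  proof -
    have "LN ri rm / LD ri rm * a \<le> b" using Suc.IH unfolding Lf_def ri_def rm_def a_def b_def .
    then show ?thesis using LD_pos[OF ri1 rim] by (simp add: field_simps)
  qed
  have sp: "0 < (Aa ri (rm-1) * LN ri rm - Bb ri (rm-1) * LD ri rm) * LD ri (rm+1) - LN ri (rm+1) * Cc ri (rm-1) * LN ri rm"
  proof -
    have h: "1 + (ri - 1) = ri" "2 + (ri - 1) + real t = rm" by (simp_all add: ri_def rm_def)
    show ?thesis using Spos[of "ri - 1" "real t"] ri1 unfolding h by simp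
  qed
  have LNp: "LN ri rm > 0" by (rule LN_pos[OF ri1 rim])
  have LD1p: "LD ri (rm+1) > 0" by (rule LD_pos[OF ri1 rim1])
  have Ccp: "Cc ri (rm-1) > 0" by (rule Cc_pos(1)[OF ri1 rim])
  have Bbp: "Bb ri (rm-1) > 0" by (rule Bb_pos[OF ri1 rim])
  have "b * (LN ri (rm+1) * Cc ri (rm-1) * LN ri rm) \<le> b * ((Aa ri (rm-1) * LN ri rm - Bb ri (rm-1) * LD ri rm) * LD ri (rm+1))"
    using sp bpos by (simp add: mult_left_mono)
  also have "\<dots> = LD ri (rm+1) * (Aa ri (rm-1) * LN ri rm * b - Bb ri (rm-1) * (LD ri rm * b))" by algebra
  also have "\<dots> \<le> LD ri (rm+1) * (Aa ri (rm-1) * LN ri rm * b - Bb ri (rm-1) * (LN ri rm * a))"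
  proof -
    have "Bb ri (rm-1) * (LN ri rm * a) \<le> Bb ri (rm-1) * (LD ri rm * b)" using IH Bbp by simp
    then show ?thesis using LD1p by (simp add: mult_left_mono)
  qed
  also have "\<dots> = Cc ri (rm-1) * LN ri rm * (LD ri (rm+1) * c)"
    using rec by algebra
  finally have "Cc ri (rm-1) * LN ri rm * (LN ri (rm+1) * b) \<le> Cc ri (rm-1) * LN ri rm * (LD ri (rm+1) * c)"
    by (simp add: algebra_simps)
  then have "LN ri (rm+1) * b \<le> LD ri (rm+1) * c"
    using Ccp LNp by (simp add: mult_le_cancel_left_pos)
  then have "LN ri (rm+1) / LD ri (rm+1) * b \<le> c" using LD1p by (simp add: field_simps)
  moreover have "real (i+1+Suc t) = rm + 1" by (simp add: rm_def)
  ultimately show ?case unfolding Lf_def ri_def b_def c_def by (simp add: add.commute add.left_commute)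
qed


lemma Nh_scale0: "Nh i m (D*x) (D*y) = D^4 * Nh i m x y"
  unfolding Nh_def by algebra

lemma Nh_scale: "Nh i m (D*x) D = D^4 * Nh i m x 1"
  using Nh_scale0[of i m D x 1] by simp

lemma part_a: assumes i1: "1 \<le> i" and im: "i + 1 \<le> m"
  shows "(boros_moll i m)^2 * ((boros_moll i m)^2 - boros_moll i (m-1) * boros_moll i (m+1))
      > (boros_moll i (m-1))^2 * ((boros_moll i (m+1))^2 - boros_moll i m * boros_moll i (m+2))"
proof -
  obtain t where mt: "m = i+1+t" using im by (metis le_Suc_ex)
  define ri where "ri = real i"
  define rm where "rm = real (i+1+t)"
  define a where "a = boros_moll i (i+t)"
  define b where "b = boros_moll i (i+1+t)"
  define c where "c = boros_moll i (i+2+t)"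
  define e where "e = boros_moll i (i+3+t)"
  have ri1: "1 \<le> ri" using i1 by (simp add: ri_def)
  have rim: "ri + 1 \<le> rm" by (simp add: ri_def rm_def)
  have apos: "a > 0" unfolding a_def by (rule bm_pos) simp
  have rec1: "Cc ri (rm-1) * c = Aa ri (rm-1) * b - Bb ri (rm-1) * a"
  proof -
    have "Cc (real i) (real (i+t)) * boros_moll i (i+t+2) = Aa (real i) (real (i+t)) * boros_moll i (i+t+1) - Bb (real i) (real (i+t)) * boros_moll i (i+t)"
      by (rule recur) simp
    moreover have "real (i+t) = rm - 1" by (simp add: rm_def)
    moreover have "i+t+2 = i+2+t" "i+t+1 = i+1+t" by simp_all
    ultimately show ?thesis unfolding a_def b_def c_def ri_def by simp
  qed
  have rec2: "Cc ri rm * e = Aa ri rm * c - Bb ri rm * b"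
  proof -
    have "Cc (real i) (real (i+1+t)) * boros_moll i (i+1+t+2) = Aa (real i) (real (i+1+t)) * boros_moll i (i+1+t+1) - Bb (real i) (real (i+1+t)) * boros_moll i (i+1+t)"
      by (rule recur) simp
    moreover have e1: "i+1+t+2 = i+3+t" "i+1+t+1 = i+2+t" by simp_all
    ultimately show ?thesis unfolding b_def c_def e_def ri_def rm_def by (simp only: e1)
  qed
  define x where "x = b / a"
  have bx: "b = x * a" unfolding x_def using apos by simp
  have LB': "Lf ri rm \<le> x"
  proof -
    have "Lf ri rm * a \<le> b" using LB[OF i1, of t] unfolding ri_def rm_def a_def b_def .
    then show ?thesis unfolding x_def using apos by (simp add: field_simps)
  qed
  define sv where "sv = x - Lf ri rm"
  have sv0: "sv \<ge> 0" using LB' by (simp add: sv_def)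
  have LDp: "LD ri rm > 0" by (rule LD_pos[OF ri1 rim])
  have np: "0 < Nh ri rm (LN ri rm + sv * LD ri rm) (LD ri rm)"
  proof -
    have h: "1 + (ri - 1) = ri" "2 + (ri - 1) + real t = rm" by (simp_all add: ri_def rm_def)
    show ?thesis using Npos[of "ri - 1" "real t" sv] ri1 sv0 unfolding h by simp
  qed
  have X: "LN ri rm + sv * LD ri rm = LD ri rm * x"
    unfolding sv_def Lf_def using LDp by (simp add: field_simps)
  have Nx: "Nh ri rm x 1 > 0"
  proof -
    have "0 < (LD ri rm)^4 * Nh ri rm x 1" using np unfolding X Nh_scale .
    then show ?thesis using LDp by (simp add: zero_less_mult_iff)
  qed
  have C1: "Cc ri (rm-1) > 0" "Cc ri rm > 0" using Cc_pos[OF ri1 rim] by auto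
  have iden: "Cc ri rm * (Cc ri (rm-1))^2 * (b^2*(b^2 - a*c) - a^2*(c^2 - b*e)) = Nh ri rm b a"
    using rec1 rec2 unfolding Nh_def by algebra
  have "Nh ri rm b a = a^4 * Nh ri rm x 1"
    using Nh_scale0[of ri rm a x 1] bx by (simp add: mult.commute)
  then have "Nh ri rm b a > 0" using apos Nx by simp
  then have "Cc ri rm * (Cc ri (rm-1))^2 * (b^2*(b^2 - a*c) - a^2*(c^2 - b*e)) > 0" using iden by simp
  moreover have "Cc ri rm * (Cc ri (rm-1))^2 > 0" using C1 by simp
  ultimately have "b^2*(b^2 - a*c) - a^2*(c^2 - b*e) > 0" by (rule zero_less_mult_pos)
  moreover have "m - 1 = i+t" "m+1 = i+2+t" "m+2 = i+3+t" using mt by simp_all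
  ultimately show ?thesis unfolding a_def b_def c_def e_def mt by (simp add: numeral_eq_Suc)
qed

theorem theorem1p3:
  shows "(\<forall>i m. 1 \<le> i \<longrightarrow> i + 1 \<le> m \<longrightarrow>
      (boros_moll i m)^2 * ((boros_moll i m)^2 - boros_moll i (m-1) * boros_moll i (m+1))
      > (boros_moll i (m-1))^2 * ((boros_moll i (m+1))^2 - boros_moll i m * boros_moll i (m+2)))
   \<and> (\<forall>m. 1 \<le> m \<longrightarrow>
      (boros_moll 0 m)^2 * ((boros_moll 0 m)^2 - boros_moll 0 (m-1) * boros_moll 0 (m+1))
      < (boros_moll 0 (m-1))^2 * ((boros_moll 0 (m+1))^2 - boros_moll 0 m * boros_moll 0 (m+2)))"
  using part_a part_b by blast


end
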